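(* A countably based topological space $X$ is quasi-Polish if and only if there is an admissible representation $\rho\colon\subseteq\omega^\omega\to X$ of $X$ such that $\mathrm{dom}(\rho)$ (with the subspace topology from $\omega^\omega$) is a Polish space.
   Context: $\omega^\omega$ carries the product (Baire space) topology. A partial function $f\colon\subseteq A\to B$ is continuous if preimages of open sets are open in $\mathrm{dom}(f)$ with its subspace topology. A partial continuous function $\rho\colon\subseteq\omega^\omega\to X$ is an admissible representation of $X$ if for every partial continuous $f\colon\subseteq\omega^\omega\to X$ there is a partial continuous $g\colon\subseteq\omega^\omega\to\omega^\omega$ with $f=\rho\circ g$. A quasi-metric on a set $X$ is a function $d\colon X\times X\to[0,\infty)$ with $x=y$ iff $d(x,y)=d(y,x)=0$ and $d(x,z)\le d(x,y)+d(y,z)$; it induces the topology generated by $B_d(x,\varepsilon)=\{y\mid d(x,y)<\varepsilon\}$; $\widehat d(x,y)=\max\{d(x,y),d(y,x)\}$. $(x_n)$ is Cauchy if for every $\varepsilon>0$ there is $n_0$ with $d(x_n,x_m)<\varepsilon$ for all $m\ge n\ge n_0$; $d$ is complete if every Cauchy sequence converges in the topology of $\widehat d$. A space is quasi-Polish if it is countably based and its topology is induced by a complete quasi-metric. *)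

theory Defs
  imports "HOL-Analysis.Analysis"
begin

definition baire_space :: "(nat \<Rightarrow> nat) topology" where
  "baire_space = product_topology (\<lambda>_. discrete_topology (UNIV :: nat set)) UNIV"

definition Polish_space :: "'a topology \<Rightarrow> bool" where
  "Polish_space X \<longleftrightarrow> completely_metrizable_space X \<and> separable_space X"

text \<open>A partial continuous map from Baire space to X is represented by its domain D
  together with a total HOL function that matters only on D.\<close>
definition admissible_rep :: "'a topology \<Rightarrow> (nat \<Rightarrow> nat) set \<Rightarrow> ((nat \<Rightarrow> nat) \<Rightarrow> 'a) \<Rightarrow> bool" where
  "admissible_rep X D \<rho> \<longleftrightarrow>
     continuous_map (subtopology baire_space D) X \<rho> \<and>
     (\<forall>(F :: (nat \<Rightarrow> nat) set) f. continuous_map (subtopology baire_space F) X f \<longrightarrow>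
        (\<exists>E g. continuous_map (subtopology baire_space E) baire_space g \<and>
               F = {p \<in> E. g p \<in> D} \<and> (\<forall>p\<in>F. f p = \<rho> (g p))))"

definition quasi_metric_on :: "'a set \<Rightarrow> ('a \<Rightarrow> 'a \<Rightarrow> real) \<Rightarrow> bool" where
  "quasi_metric_on S d \<longleftrightarrow>
     (\<forall>x\<in>S. \<forall>y\<in>S. d x y \<ge> 0) \<and>
     (\<forall>x\<in>S. \<forall>y\<in>S. x = y \<longleftrightarrow> d x y = 0 \<and> d y x = 0) \<and>
     (\<forall>x\<in>S. \<forall>y\<in>S. \<forall>z\<in>S. d x z \<le> d x y + d y z)"

definition qball :: "'a set \<Rightarrow> ('a \<Rightarrow> 'a \<Rightarrow> real) \<Rightarrow> 'a \<Rightarrow> real \<Rightarrow> 'a set" where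
  "qball S d x e = {y \<in> S. d x y < e}"

definition qtopology :: "'a set \<Rightarrow> ('a \<Rightarrow> 'a \<Rightarrow> real) \<Rightarrow> 'a topology" where
  "qtopology S d = topology_generated_by {qball S d x e | x e. x \<in> S \<and> e > 0}"

definition qhat :: "('a \<Rightarrow> 'a \<Rightarrow> real) \<Rightarrow> 'a \<Rightarrow> 'a \<Rightarrow> real" where
  "qhat d x y = max (d x y) (d y x)"

definition qcauchy :: "('a \<Rightarrow> 'a \<Rightarrow> real) \<Rightarrow> (nat \<Rightarrow> 'a) \<Rightarrow> bool" where
  "qcauchy d s \<longleftrightarrow> (\<forall>e>0. \<exists>n0. \<forall>n m. n0 \<le> n \<and> n \<le> m \<longrightarrow> d (s n) (s m) < e)"

definition qcomplete :: "'a set \<Rightarrow> ('a \<Rightarrow> 'a \<Rightarrow> real) \<Rightarrow> bool" where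
  "qcomplete S d \<longleftrightarrow>
     (\<forall>s. range s \<subseteq> S \<and> qcauchy d s \<longrightarrow>
        (\<exists>l. limitin (qtopology S (qhat d)) s l sequentially))"

definition quasi_Polish :: "'a topology \<Rightarrow> bool" where
  "quasi_Polish X \<longleftrightarrow> second_countable X \<and>
     (\<exists>d. quasi_metric_on (topspace X) d \<and> X = qtopology (topspace X) d \<and>
          qcomplete (topspace X) d)"

end

theory Submission
  imports Defs "HOL-Library.Countable" "HOL-Library.Extended_Nat"
begin

definition cyl :: "nat list \<Rightarrow> (nat \<Rightarrow> nat) set" where
  "cyl s = {p. \<forall>k<length s. p k = s!k}"

definition pre :: "(nat \<Rightarrow> nat) \<Rightarrow> nat \<Rightarrow> nat list" where
  "pre p K = map p [0..<K]"

lemma length_pre[simp]: "length (pre p K) = K" by (simp add: pre_def)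

lemma in_cyl_pre: "q \<in> cyl (pre p K) \<longleftrightarrow> (\<forall>k<K. q k = p k)"
  by (simp add: cyl_def pre_def)

lemma self_in_cyl_pre[simp]: "p \<in> cyl (pre p K)"
  by (simp add: in_cyl_pre)

lemma cyl_pre_mono: "K \<le> K' \<Longrightarrow> cyl (pre p K') \<subseteq> cyl (pre p K)"
  by (auto simp: in_cyl_pre)

lemma topspace_baire[simp]: "topspace baire_space = UNIV"
  by (simp add: baire_space_def)

lemma openin_baire:
  "openin baire_space U \<longleftrightarrow> (\<forall>p\<in>U. \<exists>K. cyl (pre p K) \<subseteq> U)"
proof
  assume "openin baire_space U"
  then have H: "\<forall>x\<in>U. \<exists>V. finite {i. V i \<noteq> UNIV} \<and> x \<in> Pi\<^sub>E UNIV V \<and> Pi\<^sub>E UNIV V \<subseteq> U"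
    unfolding baire_space_def openin_product_topology_alt by simp
  show "\<forall>p\<in>U. \<exists>K. cyl (pre p K) \<subseteq> U"
  proof
    fix p assume "p \<in> U"
    then obtain V where V: "finite {i. V i \<noteq> UNIV}" "p \<in> Pi\<^sub>E UNIV V" "Pi\<^sub>E UNIV V \<subseteq> U"
      using H by metis
    obtain K where K: "\<forall>i\<in>{i. V i \<noteq> UNIV}. i < K"
      using finite_nat_bounded[OF V(1)] by auto
    have "cyl (pre p K) \<subseteq> Pi\<^sub>E UNIV V"
    proof
      fix q assume q: "q \<in> cyl (pre p K)"
      have "q i \<in> V i" for i
      proof (cases "V i = UNIV")
        case False
        then have "i < K" using K by auto
        then show ?thesis using q V(2) by (auto simp: in_cyl_pre)
      qed simp
      then show "q \<in> Pi\<^sub>E UNIV V" by auto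
    qed
    then show "\<exists>K. cyl (pre p K) \<subseteq> U" using V(3) by blast
  qed
next
  assume H: "\<forall>p\<in>U. \<exists>K. cyl (pre p K) \<subseteq> U"
  show "openin baire_space U"
    unfolding baire_space_def openin_product_topology_alt
  proof (intro ballI)
    fix p assume "p \<in> U"
    then obtain K where K: "cyl (pre p K) \<subseteq> U" using H by blast
    define V where "V i = (if i < K then {p i} else UNIV)" for i
    have "{i. V i \<noteq> UNIV} \<subseteq> {..<K}" by (auto simp: V_def)
    then have "finite {i. V i \<noteq> UNIV}" using finite_subset by blast
    moreover have "p \<in> Pi\<^sub>E UNIV V" by (auto simp: V_def)
    moreover have "Pi\<^sub>E UNIV V \<subseteq> U"
      using K by (force simp: V_def in_cyl_pre split: if_splits)
    ultimately show "\<exists>V. finite {i \<in> UNIV. V i \<noteq> topspace (discrete_topology UNIV)} \<and>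
           (\<forall>i\<in>UNIV. openin (discrete_topology UNIV) (V i)) \<and> p \<in> Pi\<^sub>E UNIV V \<and> Pi\<^sub>E UNIV V \<subseteq> U"
      by auto
  qed
qed

lemma openin_cyl: "openin baire_space (cyl s)"
  unfolding openin_baire
proof
  fix p assume "p \<in> cyl s"
  then have "cyl (pre p (length s)) \<subseteq> cyl s" by (auto simp: cyl_def pre_def)
  then show "\<exists>K. cyl (pre p K) \<subseteq> cyl s" by blast
qed

lemma openin_sub_baire:
  "openin (subtopology baire_space F) V \<longleftrightarrow> V \<subseteq> F \<and> (\<forall>p\<in>V. \<exists>K. cyl (pre p K) \<inter> F \<subseteq> V)"
proof
  assume "openin (subtopology baire_space F) V"
  then obtain U where U: "openin baire_space U" "V = U \<inter> F" by (auto simp: openin_subtopology)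
  then show "V \<subseteq> F \<and> (\<forall>p\<in>V. \<exists>K. cyl (pre p K) \<inter> F \<subseteq> V)"
    unfolding openin_baire by blast
next
  assume H: "V \<subseteq> F \<and> (\<forall>p\<in>V. \<exists>K. cyl (pre p K) \<inter> F \<subseteq> V)"
  then obtain K where K: "\<And>p. p \<in> V \<Longrightarrow> cyl (pre p (K p)) \<inter> F \<subseteq> V" by metis
  define U where "U = (\<Union>p\<in>V. cyl (pre p (K p)))"
  have "openin baire_space U" unfolding U_def by (auto intro: openin_cyl)
  moreover have "V = U \<inter> F" using H K unfolding U_def by force
  ultimately show "openin (subtopology baire_space F) V"
    by (auto simp: openin_subtopology)
qed

lemma topspace_sub_baire[simp]: "topspace (subtopology baire_space F) = F"
  by simp

lemma cont_from_baire:
  "continuous_map (subtopology baire_space F) X f \<longleftrightarrow>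
    f ` F \<subseteq> topspace X \<and>
    (\<forall>U. openin X U \<longrightarrow> (\<forall>p\<in>F. f p \<in> U \<longrightarrow> (\<exists>K. \<forall>q\<in>cyl (pre p K) \<inter> F. f q \<in> U)))"
proof
  assume c: "continuous_map (subtopology baire_space F) X f"
  show "f ` F \<subseteq> topspace X \<and>
    (\<forall>U. openin X U \<longrightarrow> (\<forall>p\<in>F. f p \<in> U \<longrightarrow> (\<exists>K. \<forall>q\<in>cyl (pre p K) \<inter> F. f q \<in> U)))"
  proof (intro conjI allI impI ballI)
    show "f ` F \<subseteq> topspace X"
      using continuous_map_image_subset_topspace[OF c] by simp
  next
    fix U p assume U: "openin X U" and p: "p \<in> F" "f p \<in> U"
    have "openin (subtopology baire_space F) {x \<in> topspace (subtopology baire_space F). f x \<in> U}"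
      using c U unfolding continuous_map_def by blast
    then have "openin (subtopology baire_space F) {x \<in> F. f x \<in> U}" by simp
    then obtain K where "cyl (pre p K) \<inter> F \<subseteq> {x \<in> F. f x \<in> U}"
      using p unfolding openin_sub_baire by blast
    then show "\<exists>K. \<forall>q\<in>cyl (pre p K) \<inter> F. f q \<in> U" by blast
  qed
next
  assume H: "f ` F \<subseteq> topspace X \<and>
    (\<forall>U. openin X U \<longrightarrow> (\<forall>p\<in>F. f p \<in> U \<longrightarrow> (\<exists>K. \<forall>q\<in>cyl (pre p K) \<inter> F. f q \<in> U)))"
  show "continuous_map (subtopology baire_space F) X f"
    unfolding continuous_map_def
  proof (intro conjI allI impI)
    show "f \<in> topspace (subtopology baire_space F) \<rightarrow> topspace X" using H by auto
  next
    fix U assume U: "openin X U"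
    have "openin (subtopology baire_space F) {x \<in> F. f x \<in> U}"
      unfolding openin_sub_baire
    proof (intro conjI ballI)
      fix p assume "p \<in> {x \<in> F. f x \<in> U}"
      then obtain K where "\<forall>q\<in>cyl (pre p K) \<inter> F. f q \<in> U" using H U by blast
      then show "\<exists>K. cyl (pre p K) \<inter> F \<subseteq> {x \<in> F. f x \<in> U}" by blast
    qed auto
    then show "openin (subtopology baire_space F) {x \<in> topspace (subtopology baire_space F). f x \<in> U}"
      by simp
  qed
qed

lemma finite_max_bound:
  fixes t :: nat and P :: "nat \<Rightarrow> nat \<Rightarrow> bool"
  assumes "\<forall>k<t. \<exists>K. \<forall>K'\<ge>K. P k K'"
  shows "\<exists>K. \<forall>K'\<ge>K. \<forall>k<t. P k K'"
  using assms
proof (induction t)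
  case 0 then show ?case by simp
next
  case (Suc t)
  then obtain K1 where K1: "\<forall>K'\<ge>K1. \<forall>k<t. P k K'" by auto
  from Suc.prems obtain K2 where K2: "\<forall>K'\<ge>K2. P t K'" by auto
  have "\<forall>K'\<ge>max K1 K2. \<forall>k<Suc t. P k K'"
  proof (intro allI impI)
    fix K' k assume "max K1 K2 \<le> K'" "k < Suc t"
    then have "K1 \<le> K'" "K2 \<le> K'" "k < t \<or> k = t" by auto
    then show "P k K'" using K1 K2 by blast
  qed
  then show ?case by blast
qed

lemma cont_to_baire:
  "continuous_map (subtopology baire_space F) baire_space g \<longleftrightarrow>
    (\<forall>p\<in>F. \<forall>k. \<exists>K. \<forall>q\<in>cyl (pre p K) \<inter> F. g q k = g p k)"
proof
  assume c: "continuous_map (subtopology baire_space F) baire_space g"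
  show "\<forall>p\<in>F. \<forall>k. \<exists>K. \<forall>q\<in>cyl (pre p K) \<inter> F. g q k = g p k"
  proof (intro ballI allI)
    fix p k assume "p \<in> F"
    then obtain K where "\<forall>q\<in>cyl (pre p K) \<inter> F. g q \<in> cyl (pre (g p) (Suc k))"
      using c openin_cyl unfolding cont_from_baire by (metis self_in_cyl_pre)
    then show "\<exists>K. \<forall>q\<in>cyl (pre p K) \<inter> F. g q k = g p k"
      by (auto simp: in_cyl_pre)
  qed
next
  assume H: "\<forall>p\<in>F. \<forall>k. \<exists>K. \<forall>q\<in>cyl (pre p K) \<inter> F. g q k = g p k"
  show "continuous_map (subtopology baire_space F) baire_space g"
    unfolding cont_from_baire
  proof (intro conjI allI impI ballI)
    fix U p assume U: "openin baire_space U" and p: "p \<in> F" "g p \<in> U"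
    then obtain t where t: "cyl (pre (g p) t) \<subseteq> U" unfolding openin_baire by blast
    have "\<forall>k<t. \<exists>K. \<forall>K'\<ge>K. \<forall>q\<in>cyl (pre p K') \<inter> F. g q k = g p k"
    proof (intro allI impI)
      fix k assume "k < t"
      obtain K where K: "\<forall>q\<in>cyl (pre p K) \<inter> F. g q k = g p k" using H p by blast
      show "\<exists>K. \<forall>K'\<ge>K. \<forall>q\<in>cyl (pre p K') \<inter> F. g q k = g p k"
        using K cyl_pre_mono by blast
    qed
    then obtain K where K: "\<forall>K'\<ge>K. \<forall>k<t. \<forall>q\<in>cyl (pre p K') \<inter> F. g q k = g p k"
      using finite_max_bound[where P="\<lambda>k K'. \<forall>q\<in>cyl (pre p K') \<inter> F. g q k = g p k"] by blast
    show "\<exists>K. \<forall>q\<in>cyl (pre p K) \<inter> F. g q \<in> U"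
    proof (intro exI ballI)
      fix q assume "q \<in> cyl (pre p K) \<inter> F"
      then have "g q \<in> cyl (pre (g p) t)" using K by (auto simp: in_cyl_pre)
      then show "g q \<in> U" using t by blast
    qed
  qed auto
qed

definition isbase :: "'a topology \<Rightarrow> (nat \<Rightarrow> 'a set) \<Rightarrow> bool" where
  "isbase X B \<longleftrightarrow> (\<forall>n. openin X (B n)) \<and> (\<forall>U x. openin X U \<and> x \<in> U \<longrightarrow> (\<exists>n. x \<in> B n \<and> B n \<subseteq> U))"

definition eX :: "(nat \<Rightarrow> 'a set) \<Rightarrow> 'a \<Rightarrow> nat set" where
  "eX B x = {n. x \<in> B n}"

definition En :: "(nat \<Rightarrow> nat) \<Rightarrow> nat set" where
  "En p = {n. \<exists>k. p k = Suc n}"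

definition EnK :: "(nat \<Rightarrow> nat) \<Rightarrow> nat \<Rightarrow> nat set" where
  "EnK p K = {n. \<exists>k<K. p k = Suc n}"

definition Dstd :: "'a topology \<Rightarrow> (nat \<Rightarrow> 'a set) \<Rightarrow> (nat \<Rightarrow> nat) set" where
  "Dstd X B = {p. \<exists>x\<in>topspace X. En p = eX B x}"

definition rstd :: "'a topology \<Rightarrow> (nat \<Rightarrow> 'a set) \<Rightarrow> (nat \<Rightarrow> nat) \<Rightarrow> 'a" where
  "rstd X B p = (THE x. x \<in> topspace X \<and> eX B x = En p)"

definition name :: "(nat \<Rightarrow> 'a set) \<Rightarrow> 'a \<Rightarrow> nat \<Rightarrow> nat" where
  "name B x = (\<lambda>k. if x \<in> B k then Suc k else 0)"

lemma En_name[simp]: "En (name B x) = eX B x"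
  by (auto simp: En_def name_def eX_def split: if_splits)

lemma isbaseD1: "isbase X B \<Longrightarrow> openin X (B n)"
  by (simp add: isbase_def)

lemma isbaseD2: "isbase X B \<Longrightarrow> openin X U \<Longrightarrow> x \<in> U \<Longrightarrow> \<exists>n. x \<in> B n \<and> B n \<subseteq> U"
  by (simp add: isbase_def)

lemma isbase_sub: "isbase X B \<Longrightarrow> B n \<subseteq> topspace X"
  by (simp add: isbaseD1 openin_subset)

lemma isbase_cover: "isbase X B \<Longrightarrow> x \<in> topspace X \<Longrightarrow> \<exists>n. x \<in> B n"
  using isbaseD2[of X B "topspace X" x] by auto

lemma second_countable_base:
  assumes "second_countable X" shows "\<exists>B. isbase X B"
proof -
  obtain \<B> where B: "countable \<B>" "\<forall>V\<in>\<B>. openin X V"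
    "\<forall>U x. openin X U \<and> x \<in> U \<longrightarrow> (\<exists>V\<in>\<B>. x \<in> V \<and> V \<subseteq> U)"
    using assms unfolding second_countable_def by blast
  define \<B>' where "\<B>' = insert {} \<B>"
  have c: "countable \<B>'" "\<B>' \<noteq> {}" using B(1) by (auto simp: \<B>'_def)
  define B where "B = from_nat_into \<B>'"
  have r: "range B = \<B>'" using c by (simp add: B_def range_from_nat_into)
  have "isbase X B"
    unfolding isbase_def
  proof (intro conjI allI impI)
    fix n show "openin X (B n)"
      using r B(2) unfolding \<B>'_def by (metis insert_iff openin_empty rangeI)
  next
    fix U x assume "openin X U \<and> x \<in> U"
    then obtain V where "V \<in> \<B>" "x \<in> V" "V \<subseteq> U" using B(3) by blast
    moreover then have "V \<in> range B" using r by (auto simp: \<B>'_def)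
    ultimately show "\<exists>n. x \<in> B n \<and> B n \<subseteq> U" by auto
  qed
  then show ?thesis by blast
qed

lemma rstd:
  assumes "inj_on (eX B) (topspace X)" "p \<in> Dstd X B"
  shows "rstd X B p \<in> topspace X \<and> eX B (rstd X B p) = En p"
proof -
  obtain x where x: "x \<in> topspace X" "En p = eX B x" using assms(2) by (auto simp: Dstd_def)
  have "\<exists>!x. x \<in> topspace X \<and> eX B x = En p"
    using x assms(1) by (auto dest: inj_onD)
  then show ?thesis unfolding rstd_def by (rule theI')
qed

lemma rstd_eq:
  assumes "inj_on (eX B) (topspace X)" "x \<in> topspace X" "En p = eX B x"
  shows "rstd X B p = x"
proof -
  have "p \<in> Dstd X B" using assms by (auto simp: Dstd_def)
  then show ?thesis using rstd[OF assms(1)] assms by (metis inj_onD)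
qed

lemma name_Dstd: "x \<in> topspace X \<Longrightarrow> name B x \<in> Dstd X B"
  by (auto simp: Dstd_def)

lemma cont_rstd:
  assumes b: "isbase X B" and i: "inj_on (eX B) (topspace X)"
  shows "continuous_map (subtopology baire_space (Dstd X B)) X (rstd X B)"
  unfolding cont_from_baire
proof (intro conjI allI impI ballI)
  show "rstd X B ` Dstd X B \<subseteq> topspace X" using rstd[OF i] by auto
next
  fix U p assume U: "openin X U" and p: "p \<in> Dstd X B" "rstd X B p \<in> U"
  obtain n where n: "rstd X B p \<in> B n" "B n \<subseteq> U" using isbaseD2[OF b U p(2)] by blast
  then have "n \<in> En p" using rstd[OF i p(1)] by (auto simp: eX_def)
  then obtain k where k: "p k = Suc n" by (auto simp: En_def)
  show "\<exists>K. \<forall>q\<in>cyl (pre p K) \<inter> Dstd X B. rstd X B q \<in> U"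
  proof (intro exI ballI)
    fix q assume q: "q \<in> cyl (pre p (Suc k)) \<inter> Dstd X B"
    then have "q k = Suc n" using k by (auto simp: in_cyl_pre)
    then have "n \<in> En q" by (auto simp: En_def)
    then have "rstd X B q \<in> B n" using rstd[OF i] q by (auto simp: eX_def)
    then show "rstd X B q \<in> U" using n by blast
  qed
qed

lemma adm_std:
  assumes b: "isbase X B" and i: "inj_on (eX B) (topspace X)"
  shows "admissible_rep X (Dstd X B) (rstd X B)"
  unfolding admissible_rep_def
proof (intro conjI allI impI)
  show "continuous_map (subtopology baire_space (Dstd X B)) X (rstd X B)"
    by (rule cont_rstd[OF b i])
next
  fix F :: "(nat \<Rightarrow> nat) set" and f
  assume f: "continuous_map (subtopology baire_space F) X f"
  define g where "g p k = (case (from_nat k :: nat \<times> nat list) of (n, s) \<Rightarrow>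
      if p \<in> cyl s \<and> (\<forall>q\<in>cyl s \<inter> F. f q \<in> B n) then Suc n else 0)" for p k
  have gc: "continuous_map (subtopology baire_space F) baire_space g"
    unfolding cont_to_baire
  proof (intro ballI allI)
    fix p k
    obtain n s where ns: "(from_nat k :: nat \<times> nat list) = (n, s)" by (metis surj_pair)
    have "\<forall>q\<in>cyl (pre p (length s)) \<inter> F. g q k = g p k"
    proof
      fix q assume "q \<in> cyl (pre p (length s)) \<inter> F"
      then have "q \<in> cyl s \<longleftrightarrow> p \<in> cyl s" by (auto simp: cyl_def pre_def)
      then show "g q k = g p k" by (simp add: g_def ns)
    qed
    then show "\<exists>K. \<forall>q\<in>cyl (pre p K) \<inter> F. g q k = g p k" by blast
  qed
  have fX: "f p \<in> topspace X" if "p \<in> F" for p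
    using f that unfolding cont_from_baire by auto
  have Eg: "En (g p) = eX B (f p)" if p: "p \<in> F" for p
  proof (intro set_eqI iffI)
    fix n assume "n \<in> En (g p)"
    then obtain k where gk: "g p k = Suc n" by (auto simp: En_def)
    obtain n' s where ns: "(from_nat k :: nat \<times> nat list) = (n', s)" by (metis surj_pair)
    with gk have "n' = n" "p \<in> cyl s" "\<forall>q\<in>cyl s \<inter> F. f q \<in> B n'"
      by (auto simp: g_def split: if_splits)
    then have "p \<in> cyl s" "\<forall>q\<in>cyl s \<inter> F. f q \<in> B n" by auto
    then show "n \<in> eX B (f p)" using p by (auto simp: eX_def)
  next
    fix n assume "n \<in> eX B (f p)"
    then have "f p \<in> B n" by (simp add: eX_def)
    then obtain K where K: "\<forall>q\<in>cyl (pre p K) \<inter> F. f q \<in> B n"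
      using f p isbaseD1[OF b] unfolding cont_from_baire by blast
    define k where "k = to_nat (n, pre p K)"
    have "g p k = Suc n" using K by (simp add: g_def k_def)
    then show "n \<in> En (g p)" by (auto simp: En_def)
  qed
  have gD: "g p \<in> Dstd X B" if "p \<in> F" for p
    using Eg[OF that] fX[OF that] by (auto simp: Dstd_def)
  show "\<exists>E g. continuous_map (subtopology baire_space E) baire_space g \<and>
              F = {p \<in> E. g p \<in> Dstd X B} \<and> (\<forall>p\<in>F. f p = rstd X B (g p))"
  proof (intro exI conjI)
    show "F = {p \<in> F. g p \<in> Dstd X B}" using gD by auto
    show "\<forall>p\<in>F. f p = rstd X B (g p)"
    proof
      fix p assume p: "p \<in> F"
      show "f p = rstd X B (g p)"
        using rstd_eq[OF i fX[OF p], of "g p"] Eg[OF p] by simp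
    qed
  qed (rule gc)
qed

definition PiChar :: "'a topology \<Rightarrow> (nat \<Rightarrow> 'a set) \<Rightarrow> ('i \<Rightarrow> nat set) \<Rightarrow> ('i \<Rightarrow> nat \<Rightarrow> bool) \<Rightarrow> bool" where
  "PiChar X B F J \<longleftrightarrow> (\<forall>i. finite (F i)) \<and>
     (\<forall>A. (\<exists>x\<in>topspace X. A = eX B x) \<longleftrightarrow> (\<forall>i. F i \<subseteq> A \<longrightarrow> (\<exists>j\<in>A. J i j)))"

lemma baire_cm: "completely_metrizable_space baire_space"
  unfolding baire_space_def
  by (simp add: completely_metrizable_space_product_topology completely_metrizable_space_discrete_topology)

lemma baire_sc: "second_countable baire_space"
  unfolding second_countable_def
proof (intro exI conjI)
  show "countable (range cyl)" by simp
  show "\<forall>V\<in>range cyl. openin baire_space V" using openin_cyl by auto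
  show "\<forall>U x. openin baire_space U \<and> x \<in> U \<longrightarrow> (\<exists>V\<in>range cyl. x \<in> V \<and> V \<subseteq> U)"
  proof (intro allI impI)
    fix U x assume "openin baire_space U \<and> x \<in> U"
    then obtain K where "cyl (pre x K) \<subseteq> U" unfolding openin_baire by blast
    then show "\<exists>V\<in>range cyl. x \<in> V \<and> V \<subseteq> U" using self_in_cyl_pre by blast
  qed
qed

lemma Polish_sub: "gdelta_in baire_space D \<Longrightarrow> Polish_space (subtopology baire_space D)"
  unfolding Polish_space_def
  using completely_metrizable_space_gdelta_in[OF baire_cm]
    second_countable_imp_separable_space[OF second_countable_subtopology[OF baire_sc]]
  by blast

lemma Polish_gdelta: "Polish_space (subtopology baire_space D) \<Longrightarrow> gdelta_in baire_space D"
  unfolding Polish_space_def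
  by (rule completely_metrizable_space_imp_gdelta_in[OF completely_metrizable_imp_metrizable_space[OF baire_cm]]) auto

lemma EnK_sub: "EnK p K \<subseteq> En p"
  by (auto simp: EnK_def En_def)

lemma EnK_mono: "K \<le> K' \<Longrightarrow> EnK p K \<subseteq> EnK p K'"
  unfolding EnK_def using less_le_trans by blast

lemma finite_EnK:
  assumes "finite S" "S \<subseteq> En p" shows "\<exists>K. S \<subseteq> EnK p K"
  using assms
proof (induction S rule: finite_induct)
  case empty then show ?case by simp
next
  case (insert n S)
  then obtain K where K: "S \<subseteq> EnK p K" by auto
  from insert.prems obtain k where k: "p k = Suc n" by (auto simp: En_def)
  have "S \<subseteq> EnK p (max K (Suc k))" using K EnK_mono[of K "max K (Suc k)" p] by auto
  moreover have "k < max K (Suc k)" by simp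
  then have "n \<in> EnK p (max K (Suc k))" using k unfolding EnK_def by blast
  ultimately show ?case by blast
qed

lemma EnK_cyl: "q \<in> cyl (pre p K) \<Longrightarrow> EnK q K = EnK p K"
  by (auto simp: EnK_def in_cyl_pre)

lemma Dstd_gdelta:
  fixes F :: "'i::countable \<Rightarrow> nat set"
  assumes pc: "PiChar X B F J"
  shows "gdelta_in baire_space (Dstd X B)"
proof -
  define Op where "Op = (\<lambda>(i, K). {p. \<not> F i \<subseteq> EnK p K \<or> (\<exists>j\<in>En p. J i j)})"
  have fin: "finite (F i)" for i using pc by (simp add: PiChar_def)
  have eq: "Dstd X B = \<Inter> (range Op)"
  proof (intro set_eqI iffI)
    fix p assume "p \<in> Dstd X B"
    then have "\<exists>x\<in>topspace X. En p = eX B x" by (simp add: Dstd_def)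
    then have H: "\<forall>i. F i \<subseteq> En p \<longrightarrow> (\<exists>j\<in>En p. J i j)"
      using pc unfolding PiChar_def by blast
    show "p \<in> \<Inter> (range Op)"
      using H EnK_sub by (fastforce simp: Op_def)
  next
    fix p assume p: "p \<in> \<Inter> (range Op)"
    have "\<forall>i. F i \<subseteq> En p \<longrightarrow> (\<exists>j\<in>En p. J i j)"
    proof (intro allI impI)
      fix i assume "F i \<subseteq> En p"
      then obtain K where "F i \<subseteq> EnK p K" using finite_EnK fin by blast
      moreover have "p \<in> Op (i, K)" using p by blast
      ultimately show "\<exists>j\<in>En p. J i j" by (simp add: Op_def)
    qed
    then have "\<exists>x\<in>topspace X. En p = eX B x"
      using pc unfolding PiChar_def by metis
    then show "p \<in> Dstd X B" by (simp add: Dstd_def)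
  qed
  have op: "openin baire_space (Op iK)" for iK
  proof -
    obtain i K where iK: "iK = (i, K)" by (metis surj_pair)
    show ?thesis
      unfolding openin_baire
    proof
      fix p assume "p \<in> Op iK"
      then have "\<not> F i \<subseteq> EnK p K \<or> (\<exists>j\<in>En p. J i j)" by (simp add: Op_def iK)
      then show "\<exists>K. cyl (pre p K) \<subseteq> Op iK"
      proof
        assume "\<not> F i \<subseteq> EnK p K"
        then have "cyl (pre p K) \<subseteq> Op iK" using EnK_cyl by (auto simp: Op_def iK)
        then show ?thesis by blast
      next
        assume "\<exists>j\<in>En p. J i j"
        then obtain j k where j: "J i j" "p k = Suc j" by (auto simp: En_def)
        have "cyl (pre p (Suc k)) \<subseteq> Op iK"
        proof
          fix q assume "q \<in> cyl (pre p (Suc k))"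
          then have "q k = Suc j" using j by (auto simp: in_cyl_pre)
          then show "q \<in> Op iK" using j by (auto simp: Op_def iK En_def)
        qed
        then show ?thesis by blast
      qed
    qed
  qed
  show ?thesis
    unfolding gdelta_in_alt eq intersection_of_def
    using op by (intro conjI exI[of _ "range Op"]) (auto intro: countable_image)
qed

section \<open>Quasi-metric topologies\<close>

lemma qball_open: "x \<in> S \<Longrightarrow> e > 0 \<Longrightarrow> openin (qtopology S d) (qball S d x e)"
  unfolding qtopology_def by (rule topology_generated_by_Basis) blast

lemma qball_sub: "qball S d x e \<subseteq> S"
  by (auto simp: qball_def)

lemma qtop_topspace:
  assumes "\<forall>x\<in>S. d x x = 0" shows "topspace (qtopology S d) = S"
proof -
  have 1: "x \<in> qball S d x 1" if "x \<in> S" for x using assms that by (simp add: qball_def)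
  show ?thesis unfolding qtopology_def topology_generated_by_topspace
  proof
    show "\<Union> {qball S d x e |x e. x \<in> S \<and> 0 < e} \<subseteq> S"
    proof (rule Union_least)
      fix Y assume "Y \<in> {qball S d x e |x e. x \<in> S \<and> 0 < e}"
      then obtain x e where "Y = qball S d x e" by blast
      then show "Y \<subseteq> S" using qball_sub by simp
    qed
    show "S \<subseteq> \<Union> {qball S d x e |x e. x \<in> S \<and> 0 < e}"
    proof
      fix x assume x: "x \<in> S"
      have "\<exists>x' e. qball S d x 1 = qball S d x' e \<and> x' \<in> S \<and> 0 < (e::real)"
        using x by (intro exI[of _ x] exI[of _ "1::real"]) simp
      then have "qball S d x 1 \<in> {qball S d x e |x e. x \<in> S \<and> 0 < e}" by simp
      then show "x \<in> \<Union> {qball S d x e |x e. x \<in> S \<and> 0 < e}" using 1[OF x] by blast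
    qed
  qed
qed

lemma qtop_open_ball:
  assumes tri: "\<forall>x\<in>S. \<forall>y\<in>S. \<forall>z\<in>S. d x z \<le> d x y + d y z"
    and U: "openin (qtopology S d) U"
  shows "\<forall>x\<in>U. \<exists>e>0. qball S d x e \<subseteq> U"
proof -
  have "generate_topology_on {qball S d x e | x e. x \<in> S \<and> e > 0} U"
    using U unfolding qtopology_def openin_topology_generated_by_iff .
  then show ?thesis
  proof (induction rule: generate_topology_on.induct)
    case Empty then show ?case by simp
  next
    case (Int a b)
    show ?case
    proof
      fix x assume "x \<in> a \<inter> b"
      then obtain e1 e2 where "e1 > 0" "qball S d x e1 \<subseteq> a" "e2 > 0" "qball S d x e2 \<subseteq> b"
        using Int.IH by blast
      then have "min e1 e2 > 0" "qball S d x (min e1 e2) \<subseteq> a \<inter> b"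
        by (auto simp: qball_def)
      then show "\<exists>e>0. qball S d x e \<subseteq> a \<inter> b" by blast
    qed
  next
    case (UN K)
    show ?case
    proof
      fix x assume "x \<in> \<Union>K"
      then obtain k where "k \<in> K" "x \<in> k" by blast
      then obtain e where "e > 0" "qball S d x e \<subseteq> k" using UN.IH by blast
      then show "\<exists>e>0. qball S d x e \<subseteq> \<Union>K" using \<open>k \<in> K\<close> by blast
    qed
  next
    case (Basis s)
    then obtain c r where s: "s = qball S d c r" "c \<in> S" "r > 0" by blast
    show ?case
    proof
      fix x assume "x \<in> s"
      then have x: "x \<in> S" "d c x < r" using s by (auto simp: qball_def)
      have "qball S d x (r - d c x) \<subseteq> s"
      proof
        fix y assume "y \<in> qball S d x (r - d c x)"
        then have "y \<in> S" "d x y < r - d c x" by (auto simp: qball_def)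
        moreover have "d c y \<le> d c x + d x y" using tri s(2) x(1) \<open>y \<in> S\<close> by blast
        ultimately show "y \<in> s" using s by (auto simp: qball_def)
      qed
      then show "\<exists>e>0. qball S d x e \<subseteq> s" using x(2) by (intro exI[of _ "r - d c x"]) auto
    qed
  qed
qed

lemma qtop_openI:
  assumes "\<forall>x\<in>S. d x x = 0" "U \<subseteq> S" "\<forall>x\<in>U. \<exists>e>0. qball S d x e \<subseteq> U"
  shows "openin (qtopology S d) U"
  unfolding openin_subopen[of _ U]
proof
  fix x assume x: "x \<in> U"
  then obtain e where e: "e > 0" "qball S d x e \<subseteq> U" using assms(3) by blast
  have "x \<in> S" using x assms(2) by blast
  then have "x \<in> qball S d x e" using assms(1) e by (simp add: qball_def)
  then show "\<exists>T. openin (qtopology S d) T \<and> x \<in> T \<and> T \<subseteq> U"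
    using qball_open[OF \<open>x \<in> S\<close> e(1)] e(2) by blast
qed

lemma qhat_tri:
  assumes "\<forall>x\<in>S. \<forall>y\<in>S. \<forall>z\<in>S. d x z \<le> d x y + d y z"
  shows "\<forall>x\<in>S. \<forall>y\<in>S. \<forall>z\<in>S. qhat d x z \<le> qhat d x y + qhat d y z"
proof (intro ballI)
  fix x y z assume "x \<in> S" "y \<in> S" "z \<in> S"
  then have "d x z \<le> d x y + d y z" "d z x \<le> d z y + d y x" using assms by blast+
  then show "qhat d x z \<le> qhat d x y + qhat d y z" unfolding qhat_def by linarith
qed

lemma qlimI:
  assumes tri: "\<forall>x\<in>S. \<forall>y\<in>S. \<forall>z\<in>S. d x z \<le> d x y + d y z" and z: "\<forall>x\<in>S. d x x = 0"
    and x: "x \<in> S" and s: "range s \<subseteq> S"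
    and lim: "\<forall>e>0. eventually (\<lambda>n. qhat d x (s n) < e) sequentially"
  shows "limitin (qtopology S (qhat d)) s x sequentially"
proof -
  have z': "\<forall>x\<in>S. qhat d x x = 0" using z by (simp add: qhat_def)
  show ?thesis
    unfolding limitin_def
  proof (intro conjI allI impI)
    show "x \<in> topspace (qtopology S (qhat d))" using qtop_topspace[of S "qhat d", OF z'] x by simp
  next
    fix U assume U: "openin (qtopology S (qhat d)) U \<and> x \<in> U"
    then obtain e where e: "e > 0" "qball S (qhat d) x e \<subseteq> U"
      using qtop_open_ball[OF qhat_tri[OF tri]] by blast
    have ev: "\<forall>\<^sub>F n in sequentially. qhat d x (s n) < e" using lim e(1) by blast
    show "\<forall>\<^sub>F n in sequentially. s n \<in> U"
      using ev
    proof (rule eventually_mono)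
      fix n assume "qhat d x (s n) < e"
      moreover have "s n \<in> S" using s by auto
      ultimately show "s n \<in> U" using e(2) by (auto simp: qball_def)
    qed
  qed
qed

lemma qlimD:
  assumes z: "\<forall>x\<in>S. d x x = 0"
    and l: "limitin (qtopology S (qhat d)) s x sequentially" and e: "e > 0"
  shows "x \<in> S \<and> eventually (\<lambda>n. qhat d x (s n) < e) sequentially"
proof -
  have z': "\<forall>x\<in>S. qhat d x x = 0" using z by (simp add: qhat_def)
  have x: "x \<in> S" using l qtop_topspace[of S "qhat d", OF z'] by (simp add: limitin_def)
  have "x \<in> qball S (qhat d) x e" using x z' e by (simp add: qball_def)
  then have "\<forall>\<^sub>F n in sequentially. s n \<in> qball S (qhat d) x e"
    using l qball_open[OF x e] unfolding limitin_def by blast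
  then show ?thesis using x by (auto elim!: eventually_mono simp: qball_def)
qed

definition dsum :: "(nat \<Rightarrow> 'a \<Rightarrow> 'a \<Rightarrow> bool) \<Rightarrow> 'a \<Rightarrow> 'a \<Rightarrow> real" where
  "dsum c x y = (\<Sum>k. if c k x y then (1/2::real)^(Suc k) else 0)"

lemma geo_summable: "summable (\<lambda>k. (1/2::real)^(Suc k))"
  using power_half_series sums_summable by blast

lemma dsum_summable: "summable (\<lambda>k. if c k x y then (1/2::real)^(Suc k) else 0)"
  by (rule summable_comparison_test'[OF geo_summable, of 0]) auto

lemma dsum_nonneg: "0 \<le> dsum c x y"
  unfolding dsum_def by (rule suminf_nonneg[OF dsum_summable]) auto

lemma dsum_ge: "c k x y \<Longrightarrow> (1/2)^(Suc k) \<le> dsum c x y"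
  unfolding dsum_def
  using sum_le_suminf[OF dsum_summable, of "{k}" c x y] by auto

lemma dsum_tri:
  assumes "\<And>k. c k x z \<Longrightarrow> c k x y \<or> c k y z"
  shows "dsum c x z \<le> dsum c x y + dsum c y z"
proof -
  have "dsum c x y + dsum c y z =
     (\<Sum>k. (if c k x y then (1/2::real)^(Suc k) else 0) + (if c k y z then (1/2::real)^(Suc k) else 0))"
    unfolding dsum_def by (rule suminf_add[OF dsum_summable dsum_summable])
  moreover have "dsum c x z \<le> (\<Sum>k. (if c k x y then (1/2::real)^(Suc k) else 0) + (if c k y z then (1/2::real)^(Suc k) else 0))"
    unfolding dsum_def
    by (rule suminf_le) (use assms in \<open>auto intro: summable_add dsum_summable\<close>)
  ultimately show ?thesis by simp
qed

lemma dsum_zero: "dsum c x y = 0 \<longleftrightarrow> (\<forall>k. \<not> c k x y)"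
  unfolding dsum_def
  using suminf_eq_zero_iff[OF dsum_summable, of c x y] by auto

lemma dsum_small:
  assumes "\<forall>k\<le>N. \<not> c k x y"
  shows "dsum c x y \<le> (1/2)^(Suc N)"
proof -
  let ?f = "\<lambda>k. if c k x y then (1/2::real)^(Suc k) else 0"
  have "dsum c x y = (\<Sum>n. ?f (n + Suc N)) + (\<Sum>i<Suc N. ?f i)"
    unfolding dsum_def by (rule suminf_split_initial_segment[OF dsum_summable])
  moreover have "(\<Sum>i<Suc N. ?f i) = 0" using assms by auto
  moreover have "(\<Sum>n. ?f (n + Suc N)) \<le> (\<Sum>n. (1/2)^(Suc N) * (1/2::real)^(Suc n))"
  proof (rule suminf_le)
    show "summable (\<lambda>n. ?f (n + Suc N))"
      by (rule summable_ignore_initial_segment[OF dsum_summable])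
    show "summable (\<lambda>n. (1/2)^(Suc N) * (1/2::real)^(Suc n))"
      by (rule summable_mult[OF geo_summable])
    fix n show "?f (n + Suc N) \<le> (1/2)^(Suc N) * (1/2::real)^(Suc n)"
      by (auto simp: power_add[symmetric])
  qed
  moreover have "(\<Sum>n. (1/2)^(Suc N) * (1/2::real)^(Suc n)) = (1/2)^(Suc N)"
    using suminf_mult[OF geo_summable, of "(1/2)^(Suc N)"] power_half_series sums_unique by fastforce
  ultimately show ?thesis by linarith
qed

lemma small_power: "(e::real) > 0 \<Longrightarrow> \<exists>N. (1/2)^(Suc N) < e"
proof -
  assume "e > 0"
  then obtain N where "(1/2::real)^N < e" using real_arch_pow_inv[of e "1/2"] by auto
  moreover have "(1/2::real)^(Suc N) \<le> (1/2)^N" by simp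
  ultimately show ?thesis by (meson le_less_trans)
qed

definition Wt :: "('i \<Rightarrow> nat \<Rightarrow> bool) \<Rightarrow> 'i \<Rightarrow> nat set \<Rightarrow> enat" where
  "Wt J i A = (if \<exists>j\<in>A. J i j then enat (LEAST j. j \<in> A \<and> J i j) else \<infinity>)"

lemma Wt_le: "j \<in> A \<Longrightarrow> J i j \<Longrightarrow> Wt J i A \<le> enat j"
  unfolding Wt_def by (auto intro: Least_le)

lemma Wt_fin: "Wt J i A = enat j \<Longrightarrow> j \<in> A \<and> J i j"
  unfolding Wt_def by (auto split: if_splits intro: LeastI2_ex)

lemma Wt_inf: "Wt J i A = \<infinity> \<longleftrightarrow> \<not> (\<exists>j\<in>A. J i j)"
  unfolding Wt_def by auto

definition cfam :: "(nat \<Rightarrow> 'a set) \<Rightarrow> ('i::countable \<Rightarrow> nat \<Rightarrow> bool) \<Rightarrow> nat \<Rightarrow> 'a \<Rightarrow> 'a \<Rightarrow> bool" where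
  "cfam B J k x y = (if even k then (k div 2 \<in> eX B x \<and> k div 2 \<notin> eX B y)
     else Wt J (from_nat (k div 2)) (eX B x) < Wt J (from_nat (k div 2)) (eX B y))"

lemma cfam_tri: "cfam B J k x z \<Longrightarrow> cfam B J k x y \<or> cfam B J k y z"
  unfolding cfam_def by (auto split: if_splits)

lemma cfam_refl: "\<not> cfam B J k x x"
  unfolding cfam_def by auto

lemma cfam_even: "cfam B J (2*n) x y \<longleftrightarrow> n \<in> eX B x \<and> n \<notin> eX B y"
  unfolding cfam_def by simp

lemma cfam_odd: "cfam B J (Suc (2*to_nat i)) x y \<longleftrightarrow> Wt J i (eX B x) < Wt J i (eX B y)"
  unfolding cfam_def by simp

lemma nbhd_fin:
  fixes N :: nat
  assumes "\<forall>k. \<exists>V. openin X V \<and> x \<in> V \<and> (\<forall>z\<in>V. \<not> c k x z)"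
  shows "\<exists>V. openin X V \<and> x \<in> V \<and> (\<forall>z\<in>V. \<forall>k\<le>N. \<not> c k x z)"
proof (induction N)
  case 0 then show ?case using assms by auto
next
  case (Suc N)
  then obtain V1 where V1: "openin X V1" "x \<in> V1" "\<forall>z\<in>V1. \<forall>k\<le>N. \<not> c k x z" by blast
  obtain V2 where V2: "openin X V2" "x \<in> V2" "\<forall>z\<in>V2. \<not> c (Suc N) x z" using assms by blast
  have "\<forall>z\<in>V1 \<inter> V2. \<forall>k\<le>Suc N. \<not> c k x z"
    using V1(3) V2(3) le_Suc_eq by auto
  then show ?case using V1 V2 by (intro exI[of _ "V1 \<inter> V2"]) auto
qed

lemma enat_stab:
  fixes f :: "nat \<Rightarrow> enat"
  assumes "\<forall>n m. N \<le> n \<and> n \<le> m \<longrightarrow> f m \<le> f n"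
  shows "\<exists>v. eventually (\<lambda>m. f m = v) sequentially"
proof -
  define v where "v = (LEAST v. \<exists>m\<ge>N. f m = v)"
  have ex: "\<exists>v m. m \<ge> N \<and> f m = v" by auto
  obtain m0 where m0: "m0 \<ge> N" "f m0 = v"
    using LeastI_ex[of "\<lambda>v. \<exists>m\<ge>N. f m = v"] ex unfolding v_def by blast
  have "f m = v" if "m \<ge> m0" for m
  proof (rule antisym)
    show "f m \<le> v" using assms m0 that by (metis order_trans)
    have "m \<ge> N" using m0 that by simp
    then show "v \<le> f m" unfolding v_def by (intro Least_le) blast
  qed
  then show ?thesis unfolding eventually_sequentially by blast
qed

lemma cfam_odd': "cfam B J (Suc (2*m)) x y \<longleftrightarrow> Wt J (from_nat m) (eX B x) < Wt J (from_nat m) (eX B y)"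
  unfolding cfam_def by simp

lemma L7:
  fixes F :: "'i::countable \<Rightarrow> nat set" and J :: "'i \<Rightarrow> nat \<Rightarrow> bool"
  assumes sc: "second_countable X" and b: "isbase X B" and inj: "inj_on (eX B) (topspace X)"
    and pc: "PiChar X B F J"
  shows "quasi_Polish X"
proof -
  define S where "S = topspace X"
  define c where "c = cfam B J"
  define d where "d = dsum c"
  have fin: "\<And>i. finite (F i)" using pc by (simp add: PiChar_def)
  have pcA: "\<And>A. (\<exists>x\<in>S. A = eX B x) \<longleftrightarrow> (\<forall>i. F i \<subseteq> A \<longrightarrow> (\<exists>j\<in>A. J i j))"
    using pc unfolding PiChar_def S_def by blast
  have tri: "\<forall>x\<in>S. \<forall>y\<in>S. \<forall>z\<in>S. d x z \<le> d x y + d y z"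
    unfolding d_def c_def by (intro ballI dsum_tri cfam_tri)
  have z: "\<forall>x\<in>S. d x x = 0"
    unfolding d_def c_def by (simp add: dsum_zero cfam_refl)
  have qm: "quasi_metric_on S d"
    unfolding quasi_metric_on_def
  proof (intro conjI ballI)
    fix x y assume x: "x \<in> S" and y: "y \<in> S"
    show "0 \<le> d x y" unfolding d_def by (rule dsum_nonneg)
    show "(x = y) \<longleftrightarrow> (d x y = 0 \<and> d y x = 0)"
    proof
      assume "x = y" then show "d x y = 0 \<and> d y x = 0" using z x by simp
    next
      assume "d x y = 0 \<and> d y x = 0"
      then have "\<forall>k. \<not> c k x y" "\<forall>k. \<not> c k y x" unfolding d_def by (simp_all add: dsum_zero)
      then have "\<forall>n. n \<in> eX B x \<longleftrightarrow> n \<in> eX B y"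
      proof (intro allI)
        fix n assume "\<forall>k. \<not> c k x y" "\<forall>k. \<not> c k y x"
        then have "\<not> cfam B J (2*n) x y" "\<not> cfam B J (2*n) y x" unfolding c_def by blast+
        then show "n \<in> eX B x \<longleftrightarrow> n \<in> eX B y" unfolding cfam_even by blast
      qed
      then have "eX B x = eX B y" by blast
      then show "x = y" using inj x y unfolding S_def by (meson inj_onD)
    qed
  next
    fix x y z assume "x \<in> S" "y \<in> S" "z \<in> S"
    then show "d x z \<le> d x y + d y z" using tri by blast
  qed
  have usc: "\<forall>k. \<exists>V. openin X V \<and> x \<in> V \<and> (\<forall>z\<in>V. \<not> c k x z)" if x: "x \<in> S" for x
  proof
    fix k
    show "\<exists>V. openin X V \<and> x \<in> V \<and> (\<forall>z\<in>V. \<not> c k x z)"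
    proof (cases "even k")
      case True
      define n where "n = k div 2"
      have k: "k = 2*n" using True unfolding n_def by simp
      show ?thesis
      proof (cases "x \<in> B n")
        case True
        then show ?thesis using isbaseD1[OF b, of n]
          by (intro exI[of _ "B n"]) (auto simp: c_def k cfam_even eX_def)
      next
        case False
        then show ?thesis using x unfolding S_def
          by (intro exI[of _ "topspace X"]) (auto simp: c_def k cfam_even eX_def)
      qed
    next
      case False
      define m where "m = k div 2"
      have k: "k = Suc (2*m)"
      proof -
        have "2 * (k div 2) + 1 = k" by (rule odd_two_times_div_two_succ[OF False])
        then show ?thesis unfolding m_def by linarith
      qed
      define i :: 'i where "i = from_nat m"
      show ?thesis
      proof (cases "Wt J i (eX B x)")
        case (enat j)
        have j: "j \<in> eX B x" "J i j" using Wt_fin[OF enat] by simp_all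
        have "\<forall>z\<in>B j. \<not> c k x z"
        proof
          fix z assume "z \<in> B j"
          then have "Wt J i (eX B z) \<le> enat j" using j(2) by (intro Wt_le) (auto simp: eX_def)
          then show "\<not> c k x z" unfolding c_def k cfam_odd' i_def[symmetric] enat by simp
        qed
        then show ?thesis using isbaseD1[OF b, of j] j(1) by (intro exI[of _ "B j"]) (auto simp: eX_def)
      next
        case infinity
        then show ?thesis using x unfolding S_def
          by (intro exI[of _ "topspace X"]) (auto simp: c_def k cfam_odd' i_def[symmetric])
      qed
    qed
  qed
  have nb: "\<exists>V. openin X V \<and> x \<in> V \<and> (\<forall>z\<in>V. \<forall>k\<le>N. \<not> c k x z)" if "x \<in> S" for x N
    using nbhd_fin[where c=c and X=X and x=x and N=N, OF usc[OF that]] by blast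
  have top: "X = qtopology S d"
    unfolding topology_eq
  proof (intro allI iffI)
    fix U assume U: "openin X U"
    show "openin (qtopology S d) U"
    proof (rule qtop_openI[where S=S and d=d, OF z])
      show "U \<subseteq> S" using U openin_subset unfolding S_def by blast
      show "\<forall>x\<in>U. \<exists>e>0. qball S d x e \<subseteq> U"
      proof
        fix x assume "x \<in> U"
        then obtain n where n: "x \<in> B n" "B n \<subseteq> U" using isbaseD2[OF b U] by blast
        have "qball S d x ((1/2)^(Suc (2*n))) \<subseteq> U"
        proof
          fix y assume "y \<in> qball S d x ((1/2)^(Suc (2*n)))"
          then have y: "y \<in> S" "d x y < (1/2)^(Suc (2*n))" by (auto simp: qball_def)
          have "\<not> c (2*n) x y"
          proof
            assume "c (2*n) x y"
            then have "(1/2)^(Suc (2*n)) \<le> d x y" unfolding d_def by (rule dsum_ge)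
            with y(2) show False by linarith
          qed
          then have "y \<in> B n" using n(1) unfolding c_def cfam_even eX_def by simp
          then show "y \<in> U" using n(2) by blast
        qed
        then show "\<exists>e>0. qball S d x e \<subseteq> U" by (intro exI[of _ "(1/2)^(Suc (2*n))"]) auto
      qed
    qed
  next
    fix U assume U: "openin (qtopology S d) U"
    have US: "U \<subseteq> S" using openin_subset[OF U] qtop_topspace[where S=S and d=d, OF z] by simp
    show "openin X U"
      unfolding openin_subopen[of X U]
    proof
      fix x assume xU: "x \<in> U"
      then have x: "x \<in> S" using US by blast
      obtain e where e: "e > 0" "qball S d x e \<subseteq> U" using qtop_open_ball[where S=S and d=d, OF tri U] xU by blast
      obtain N where N: "(1/2)^(Suc N) < e" using small_power[OF e(1)] by blast
      obtain V where V: "openin X V" "x \<in> V" "\<forall>z\<in>V. \<forall>k\<le>N. \<not> c k x z" using nb[OF x] by blast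
      have "V \<subseteq> qball S d x e"
      proof
        fix z assume z: "z \<in> V"
        then have "z \<in> S" using openin_subset[OF V(1)] unfolding S_def by blast
        moreover have "d x z \<le> (1/2)^(Suc N)" unfolding d_def using V(3) z by (intro dsum_small) blast
        ultimately show "z \<in> qball S d x e" using N by (simp add: qball_def)
      qed
      then show "\<exists>T. openin X T \<and> x \<in> T \<and> T \<subseteq> U" using V e(2) by blast
    qed
  qed
  have comp: "qcomplete S d"
    unfolding qcomplete_def
  proof (intro allI impI)
    fix s assume "range s \<subseteq> S \<and> qcauchy d s"
    then have sS: "range s \<subseteq> S" and cau0: "qcauchy d s" by auto
    have sS': "s m \<in> S" for m using sS by auto
    have cau: "\<exists>N. \<forall>n m. N \<le> n \<and> n \<le> m \<longrightarrow> \<not> c k (s n) (s m)" for k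
    proof -
      have pos: "(0::real) < (1/2)^(Suc k)" by simp
      obtain N where N: "\<forall>n m. N \<le> n \<and> n \<le> m \<longrightarrow> d (s n) (s m) < (1/2)^(Suc k)"
        using cau0 pos unfolding qcauchy_def by blast
      have "\<not> c k (s n) (s m)" if nm: "N \<le> n \<and> n \<le> m" for n m
      proof
        assume "c k (s n) (s m)"
        then have "(1/2)^(Suc k) \<le> d (s n) (s m)" unfolding d_def by (rule dsum_ge)
        moreover have "d (s n) (s m) < (1/2)^(Suc k)" using N nm by blast
        ultimately show False by linarith
      qed
      then show ?thesis by blast
    qed
    define A where "A = {n. \<exists>a. \<forall>m\<ge>a. n \<in> eX B (s m)}"
    have evA: "eventually (\<lambda>m. n \<in> eX B (s m) \<longleftrightarrow> n \<in> A) sequentially" for n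
    proof (cases "n \<in> A")
      case True
      then obtain a where "\<forall>m\<ge>a. n \<in> eX B (s m)" unfolding A_def by blast
      then show ?thesis using True unfolding eventually_sequentially by blast
    next
      case False
      obtain N where N: "\<forall>a m. N \<le> a \<and> a \<le> m \<longrightarrow> \<not> c (2*n) (s a) (s m)" using cau by blast
      have "n \<notin> eX B (s m)" if "m \<ge> N" for m
      proof
        assume "n \<in> eX B (s m)"
        then have "\<forall>m'\<ge>m. n \<in> eX B (s m')" using N that unfolding c_def cfam_even by auto
        then show False using False unfolding A_def by blast
      qed
      then show ?thesis using False unfolding eventually_sequentially by blast
    qed
    have stab: "\<exists>v. eventually (\<lambda>m. Wt J i (eX B (s m)) = v) sequentially" for i
    proof -
      obtain N where N: "\<forall>a m. N \<le> a \<and> a \<le> m \<longrightarrow> \<not> c (Suc (2 * to_nat i)) (s a) (s m)" using cau by blast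
      then have "\<forall>a m. N \<le> a \<and> a \<le> m \<longrightarrow> Wt J i (eX B (s m)) \<le> Wt J i (eX B (s a))"
        unfolding c_def cfam_odd by (auto simp: not_less)
      then show ?thesis by (rule enat_stab)
    qed
    have WA: "Wt J i A = v" if ev: "eventually (\<lambda>m. Wt J i (eX B (s m)) = v) sequentially" for i v
    proof (rule ccontr)
      assume ne: "Wt J i A \<noteq> v"
      show False
      proof (cases "Wt J i A < v")
        case True
        then obtain j where j: "Wt J i A = enat j" by (cases "Wt J i A") auto
        have "j \<in> A" "J i j" using Wt_fin[OF j] by simp_all
        then have "eventually (\<lambda>m. j \<in> eX B (s m)) sequentially" using evA[of j] by (auto elim: eventually_mono)
        then have "eventually (\<lambda>m. Wt J i (eX B (s m)) \<le> enat j) sequentially"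
          using \<open>J i j\<close> by (auto elim!: eventually_mono intro: Wt_le)
        then have "eventually (\<lambda>m. False) sequentially"
          using ev
        proof (rule eventually_elim2)
          fix m assume "Wt J i (eX B (s m)) \<le> enat j" "Wt J i (eX B (s m)) = v"
          then show False using True j by simp
        qed
        then show False by simp
      next
        case False
        then have lt: "v < Wt J i A" using ne by auto
        then obtain j where j: "v = enat j" by (cases v) auto
        have "eventually (\<lambda>m. j \<in> eX B (s m) \<and> J i j) sequentially"
          using ev j by (auto elim!: eventually_mono dest: Wt_fin)
        then obtain a where "\<forall>m\<ge>a. j \<in> eX B (s m)" and "J i j" unfolding eventually_sequentially by blast
        then have "j \<in> A" unfolding A_def by blast
        then have "Wt J i A \<le> enat j" using \<open>J i j\<close> by (rule Wt_le)
        then show False using lt j by simp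
      qed
    qed
    have Achar: "\<forall>i. F i \<subseteq> A \<longrightarrow> (\<exists>j\<in>A. J i j)"
    proof (intro allI impI)
      fix i assume FA: "F i \<subseteq> A"
      have "\<forall>n\<in>F i. eventually (\<lambda>m. n \<in> eX B (s m)) sequentially"
      proof
        fix n assume "n \<in> F i"
        then have "n \<in> A" using FA by blast
        then show "eventually (\<lambda>m. n \<in> eX B (s m)) sequentially" using evA[of n] by (auto elim: eventually_mono)
      qed
      then have "eventually (\<lambda>m. \<forall>n\<in>F i. n \<in> eX B (s m)) sequentially"
        by (rule eventually_ball_finite[OF fin[of i]])
      then have ev1: "eventually (\<lambda>m. \<exists>j\<in>eX B (s m). J i j) sequentially"
      proof (rule eventually_mono)
        fix m assume "\<forall>n\<in>F i. n \<in> eX B (s m)"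
        then have "F i \<subseteq> eX B (s m)" by blast
        moreover have "\<exists>x\<in>S. eX B (s m) = eX B x" using sS' by blast
        ultimately show "\<exists>j\<in>eX B (s m). J i j" using pcA by blast
      qed
      obtain v where ev: "eventually (\<lambda>m. Wt J i (eX B (s m)) = v) sequentially" using stab by blast
      have "eventually (\<lambda>m. v \<noteq> \<infinity>) sequentially"
        using ev ev1
      proof (rule eventually_elim2)
        fix m assume "Wt J i (eX B (s m)) = v" "\<exists>j\<in>eX B (s m). J i j"
        then show "v \<noteq> \<infinity>" using Wt_inf by metis
      qed
      then have "v \<noteq> \<infinity>"
      proof (rule contrapos_pp)
        assume "\<not> v \<noteq> \<infinity>"
        then show "\<not> eventually (\<lambda>m. v \<noteq> \<infinity>) sequentially" by simp
      qed
      then obtain j where j: "v = enat j" by (cases v) auto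
      then have WAj: "Wt J i A = enat j" using WA[OF ev] by simp
      show "\<exists>j\<in>A. J i j" using Wt_fin[OF WAj] by blast
    qed
    then obtain x where x: "x \<in> S" "A = eX B x" using pcA by blast
    have lim: "\<forall>e>0. eventually (\<lambda>m. qhat d x (s m) < e) sequentially"
    proof (intro allI impI)
      fix e :: real assume e: "e > 0"
      obtain N where N: "(1/2)^(Suc N) < e" using small_power[OF e] by blast
      have "eventually (\<lambda>m. \<not> c k x (s m) \<and> \<not> c k (s m) x) sequentially" for k
      proof (cases "even k")
        case True
        define n where "n = k div 2"
      have k: "k = 2*n" using True unfolding n_def by simp
        show ?thesis using evA[of n] unfolding c_def k cfam_even x(2)[symmetric]
          by (auto elim: eventually_mono)
      next
        case False
        define m where "m = k div 2"
      have k: "k = Suc (2*m)"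
      proof -
        have "2 * (k div 2) + 1 = k" by (rule odd_two_times_div_two_succ[OF False])
        then show ?thesis unfolding m_def by linarith
      qed
        define i :: 'i where "i = from_nat m"
          obtain v where ev: "eventually (\<lambda>m. Wt J i (eX B (s m)) = v) sequentially" using stab by blast
        have "Wt J i (eX B x) = v" using WA[OF ev] x(2) by simp
        then show ?thesis using ev unfolding c_def k cfam_odd' i_def[symmetric] by (auto elim: eventually_mono)
      qed
      then have "\<forall>k\<in>{..N}. eventually (\<lambda>m. \<not> c k x (s m) \<and> \<not> c k (s m) x) sequentially"
        by blast
      then have "eventually (\<lambda>m. \<forall>k\<in>{..N}. \<not> c k x (s m) \<and> \<not> c k (s m) x) sequentially"
        by (rule eventually_ball_finite[OF finite_atMost])
      then show "eventually (\<lambda>m. qhat d x (s m) < e) sequentially"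
      proof (rule eventually_mono)
        fix m assume "\<forall>k\<in>{..N}. \<not> c k x (s m) \<and> \<not> c k (s m) x"
        then have h1: "\<forall>k\<le>N. \<not> c k x (s m)" and h2: "\<forall>k\<le>N. \<not> c k (s m) x" by auto
        have "d x (s m) \<le> (1/2)^(Suc N)" unfolding d_def using h1 by (rule dsum_small)
        moreover have "d (s m) x \<le> (1/2)^(Suc N)" unfolding d_def using h2 by (rule dsum_small)
        ultimately have "d x (s m) \<le> (1/2)^(Suc N)" "d (s m) x \<le> (1/2)^(Suc N)" by auto
        then show "qhat d x (s m) < e" using N unfolding qhat_def by simp
      qed
    qed
    show "\<exists>l. limitin (qtopology S (qhat d)) s l sequentially"
      using qlimI[where S=S and d=d, OF tri z x(1) sS lim] by blast
  qed
  have qm': "quasi_metric_on (topspace X) d" using qm unfolding S_def .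
  have top': "X = qtopology (topspace X) d" using top unfolding S_def .
  have comp': "qcomplete (topspace X) d" using comp unfolding S_def .
  show ?thesis
    unfolding quasi_Polish_def
    using sc qm' top' comp' by blast
qed

type_synonym idx5 = "(nat \<times> nat) + (nat \<times> nat \<times> nat) + unit"

lemma L5:
  fixes X :: "'a topology"
  assumes qp: "quasi_Polish X" and b: "isbase X B"
  shows "inj_on (eX B) (topspace X) \<and> (\<exists>(F :: idx5 \<Rightarrow> nat set) J. PiChar X B F J)"
proof -
  define S where "S = topspace X"
  obtain d where qm: "quasi_metric_on S d" and top: "X = qtopology S d" and comp: "qcomplete S d"
    using qp unfolding quasi_Polish_def S_def by blast
  have nn: "\<forall>x\<in>S. \<forall>y\<in>S. 0 \<le> d x y" using qm unfolding quasi_metric_on_def by blast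
  have tri: "\<forall>x\<in>S. \<forall>y\<in>S. \<forall>z\<in>S. d x z \<le> d x y + d y z" using qm unfolding quasi_metric_on_def by blast
  have z: "\<forall>x\<in>S. d x x = 0" using qm unfolding quasi_metric_on_def by blast
  have sep: "\<forall>x\<in>S. \<forall>y\<in>S. d x y = 0 \<and> d y x = 0 \<longrightarrow> x = y" using qm unfolding quasi_metric_on_def by blast
  have opn: "\<exists>e>0. qball S d x e \<subseteq> U" if "openin X U" "x \<in> U" for U x
  proof -
    have "openin (qtopology S d) U" using that(1) top by simp
    then show ?thesis using qtop_open_ball[where S=S and d=d, OF tri] that(2) by blast
  qed
  have bop: "openin X (qball S d x e)" if "x \<in> S" "e > 0" for x e
    using qball_open[OF that, of d] top by simp
  have inb: "x \<in> qball S d x e" if "x \<in> S" "e > 0" for x e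
    using z that by (simp add: qball_def)
  have BS: "B n \<subseteq> S" for n using isbase_sub[OF b] unfolding S_def .
  have inj: "inj_on (eX B) S"
  proof (rule inj_onI)
    fix x y assume x: "x \<in> S" and y: "y \<in> S" and e: "eX B x = eX B y"
    have key: False if u: "u \<in> S" "v \<in> S" "eX B u = eX B v" "d u v > 0" for u v
    proof -
      obtain n where n: "u \<in> B n" "B n \<subseteq> qball S d u (d u v)"
        using isbaseD2[OF b bop[OF u(1) u(4)] inb[OF u(1) u(4)]] by blast
      then have "v \<in> B n" using u(3) by (auto simp: eX_def)
      then show False using n(2) by (auto simp: qball_def)
    qed
    show "x = y"
    proof (rule ccontr)
      assume "x \<noteq> y"
      then have "d x y \<noteq> 0 \<or> d y x \<noteq> 0" using sep x y by blast
      then have "d x y > 0 \<or> d y x > 0" using nn x y by force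
      then show False using key[OF x y e] key[OF y x e[symmetric]] by blast
    qed
  qed
  define R where "R k n m j \<longleftrightarrow> (\<exists>c r. c \<in> S \<and> 0 < r \<and> r \<le> (1/2::real)^k \<and> c \<in> B j \<and>
      B j \<subseteq> qball S d c r \<and> qball S d c (2*r) \<subseteq> B n \<inter> B m)" for k n m j
  define F :: "idx5 \<Rightarrow> nat set" where "F i = (case i of Inl (n, m) \<Rightarrow> (if B n \<subseteq> B m then {n} else {})
      | Inr (Inl (n, m, k)) \<Rightarrow> {n, m} | Inr (Inr u) \<Rightarrow> {})" for i
  define J :: "idx5 \<Rightarrow> nat \<Rightarrow> bool" where "J i j = (case i of Inl (n, m) \<Rightarrow> (if B n \<subseteq> B m then j = m else True)
      | Inr (Inl (n, m, k)) \<Rightarrow> R k n m j | Inr (Inr u) \<Rightarrow> True)" for i j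
  have finF: "finite (F i)" for i
    unfolding F_def by (auto split: sum.splits prod.splits)
  have nonemp: "eX B x \<noteq> {}" if "x \<in> S" for x
    using isbase_cover[OF b] that unfolding S_def eX_def by blast
  have dir: "\<forall>i. F i \<subseteq> eX B x \<longrightarrow> (\<exists>j\<in>eX B x. J i j)" if x: "x \<in> S" for x
  proof
    fix i :: idx5
    show "F i \<subseteq> eX B x \<longrightarrow> (\<exists>j\<in>eX B x. J i j)"
    proof (cases i)
      case (Inl nm)
      obtain n m where nm: "nm = (n, m)" by (metis surj_pair)
      show ?thesis
      proof (cases "B n \<subseteq> B m")
        case True
        then show ?thesis by (auto simp: F_def J_def Inl nm eX_def)
      next
        case False
        then show ?thesis using nonemp[OF x] by (auto simp: F_def J_def Inl nm)
      qed
    next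
      case (Inr i')
      show ?thesis
      proof (cases i')
        case (Inl nmk)
        obtain n m k where nmk: "nmk = (n, m, k)" by (metis prod_cases3)
        show ?thesis
        proof
          assume "F i \<subseteq> eX B x"
          then have xnm: "x \<in> B n \<inter> B m" by (auto simp: F_def Inr Inl nmk eX_def)
          have "openin X (B n \<inter> B m)" using isbaseD1[OF b] by blast
          then obtain e where e: "e > 0" "qball S d x e \<subseteq> B n \<inter> B m" using opn xnm by blast
          define r where "r = min (e/2) ((1/2::real)^k)"
          have r: "r > 0" "r \<le> (1/2)^k" "2*r \<le> e" using e(1) by (auto simp: r_def)
          obtain j where j: "x \<in> B j" "B j \<subseteq> qball S d x r"
            using isbaseD2[OF b bop[OF x r(1)] inb[OF x r(1)]] by blast
          have "qball S d x (2*r) \<subseteq> B n \<inter> B m" using e(2) r(3) by (auto simp: qball_def)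
          then have "R k n m j" unfolding R_def using x r j by blast
          moreover have "j \<in> eX B x" using j by (simp add: eX_def)
          ultimately show "\<exists>j\<in>eX B x. J i j" by (auto simp: J_def Inr Inl nmk)
        qed
      next
        case (Inr u)
        then show ?thesis using nonemp[OF x] \<open>i = Inr i'\<close> by (auto simp: F_def J_def)
      qed
    qed
  qed
  have conv: "\<exists>x\<in>S. A = eX B x" if H: "\<forall>i. F i \<subseteq> A \<longrightarrow> (\<exists>j\<in>A. J i j)" for A
  proof -
    have up: "m \<in> A" if "n \<in> A" "B n \<subseteq> B m" for n m
      using H[rule_format, of "Inl (n, m)"] that by (auto simp: F_def J_def)
    obtain n0 where n0: "n0 \<in> A" using H[rule_format, of "Inr (Inr ())"] by (auto simp: F_def J_def)
    define a where "a k = (if k \<in> A then k else n0)" for k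
    have aA: "a k \<in> A" for k using n0 by (simp add: a_def)
    have step: "\<exists>j\<in>A. R k n m j" if "n \<in> A" "m \<in> A" for k n m
      using H[rule_format, of "Inr (Inl (n, m, k))"] that by (auto simp: F_def J_def)
    define nx where "nx = rec_nat n0 (\<lambda>k n. SOME j. j \<in> A \<and> R (Suc k) n (a k) j)"
    have nx0: "nx 0 = n0" by (simp add: nx_def)
    have nxS: "nx (Suc k) = (SOME j. j \<in> A \<and> R (Suc k) (nx k) (a k) j)" for k by (simp add: nx_def)
    have nxA: "nx k \<in> A \<and> (\<forall>k'. k = Suc k' \<longrightarrow> R (Suc k') (nx k') (a k') (nx k))" for k
    proof (induction k)
      case 0 then show ?case using n0 nx0 by simp
    next
      case (Suc k)
      then have "\<exists>j. j \<in> A \<and> R (Suc k) (nx k) (a k) j" using step aA by blast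
      then have "nx (Suc k) \<in> A \<and> R (Suc k) (nx k) (a k) (nx (Suc k))"
        unfolding nxS by (rule someI_ex)
      then show ?case by simp
    qed
    have Rk: "R (Suc k) (nx k) (a k) (nx (Suc k))" for k using nxA by blast
    then have "\<forall>k. \<exists>c r. c \<in> S \<and> 0 < r \<and> r \<le> (1/2::real)^(Suc k) \<and> c \<in> B (nx (Suc k)) \<and>
      B (nx (Suc k)) \<subseteq> qball S d c r \<and> qball S d c (2*r) \<subseteq> B (nx k) \<inter> B (a k)"
      unfolding R_def by blast
    then obtain cc rr where ccrr: "\<And>k. cc k \<in> S \<and> 0 < rr k \<and> rr k \<le> (1/2::real)^(Suc k) \<and> cc k \<in> B (nx (Suc k)) \<and>
      B (nx (Suc k)) \<subseteq> qball S d (cc k) (rr k) \<and> qball S d (cc k) (2 * rr k) \<subseteq> B (nx k) \<inter> B (a k)"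
      by metis
    have ballmono: "qball S d c r \<subseteq> qball S d c r'" if "r \<le> r'" for c r r'
      using that by (auto simp: qball_def)
    have dec: "B (nx (Suc k)) \<subseteq> B (nx k)" for k
    proof -
      have "B (nx (Suc k)) \<subseteq> qball S d (cc k) (rr k)" using ccrr by blast
      also have "\<dots> \<subseteq> qball S d (cc k) (2 * rr k)" using ccrr[of k] by (intro ballmono) auto
      also have "\<dots> \<subseteq> B (nx k)" using ccrr by blast
      finally show ?thesis .
    qed
    have decle: "B (nx m) \<subseteq> B (nx k)" if "k \<le> m" for k m
      using lift_Suc_antimono_le[of "\<lambda>k. B (nx k)", OF dec that] .
    have dcc: "d (cc k) (cc m) < rr k" if "k \<le> m" for k m
    proof -
      have "cc m \<in> B (nx (Suc m))" using ccrr by blast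
      also have "\<dots> \<subseteq> B (nx (Suc k))" using that by (intro decle) simp
      also have "\<dots> \<subseteq> qball S d (cc k) (rr k)" using ccrr by blast
      finally show ?thesis by (simp add: qball_def)
    qed
    have ccS: "range cc \<subseteq> S" using ccrr by blast
    have cau: "qcauchy d cc"
      unfolding qcauchy_def
    proof (intro allI impI)
      fix e :: real assume "e > 0"
      then obtain N where N: "(1/2)^(Suc N) < e" using small_power by blast
      have "d (cc n) (cc m) < e" if "N \<le> n \<and> n \<le> m" for n m
      proof -
        have "d (cc n) (cc m) < rr n" using dcc that by blast
        also have "rr n \<le> (1/2)^(Suc n)" using ccrr by blast
        also have "(1/2::real)^(Suc n) \<le> (1/2)^(Suc N)" using that by (intro power_decreasing) auto
        finally show ?thesis using N by linarith
      qed
      then show "\<exists>n0. \<forall>n m. n0 \<le> n \<and> n \<le> m \<longrightarrow> d (cc n) (cc m) < e" by blast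
    qed
    obtain l where l: "limitin (qtopology S (qhat d)) cc l sequentially"
      using comp ccS cau unfolding qcomplete_def by blast
    have lS: "l \<in> S" using qlimD[where S=S and d=d, OF z l, of 1] by simp
    have evl: "eventually (\<lambda>n. d l (cc n) < e \<and> d (cc n) l < e) sequentially" if "e > 0" for e
      using qlimD[where S=S and d=d, OF z l that] unfolding qhat_def by (auto elim: eventually_mono)
    have inall: "l \<in> B (nx k) \<inter> B (a k)" for k
    proof -
      obtain M where M: "\<forall>n\<ge>M. d (cc n) l < rr k"
        using evl[of "rr k"] ccrr[of k] unfolding eventually_sequentially by blast
      define m where "m = max k M"
      have "d (cc k) l \<le> d (cc k) (cc m) + d (cc m) l" using tri ccS lS by blast
      moreover have "d (cc k) (cc m) < rr k" using dcc by (simp add: m_def)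
      moreover have "d (cc m) l < rr k" using M by (simp add: m_def)
      ultimately have "l \<in> qball S d (cc k) (2 * rr k)" using lS by (simp add: qball_def)
      then show ?thesis using ccrr by blast
    qed
    have "A = eX B l"
    proof
      show "A \<subseteq> eX B l"
      proof
        fix n assume "n \<in> A"
        then have "a n = n" by (simp add: a_def)
        then show "n \<in> eX B l" using inall[of n] by (simp add: eX_def)
      qed
    next
      show "eX B l \<subseteq> A"
      proof
        fix m assume "m \<in> eX B l"
        then have lm: "l \<in> B m" by (simp add: eX_def)
        obtain e where e: "e > 0" "qball S d l e \<subseteq> B m" using opn[OF isbaseD1[OF b] lm] by blast
        obtain M where M: "\<forall>n\<ge>M. d l (cc n) < e/2"
          using evl[of "e/2"] e(1) unfolding eventually_sequentially by auto
        obtain N where N: "(1/2)^(Suc N) < e/2" using small_power[of "e/2"] e(1) by auto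
        define k where "k = max M N"
        have "B (nx (Suc k)) \<subseteq> B m"
        proof
          fix y assume y: "y \<in> B (nx (Suc k))"
          then have yb: "y \<in> qball S d (cc k) (rr k)" using ccrr by blast
          then have yS: "y \<in> S" by (simp add: qball_def)
          have "d l y \<le> d l (cc k) + d (cc k) y" using tri lS ccS yS by blast
          moreover have "d l (cc k) < e/2" using M by (simp add: k_def)
          moreover have "d (cc k) y < rr k" using yb by (simp add: qball_def)
          moreover have "rr k \<le> (1/2)^(Suc k)" using ccrr by blast
          moreover have "(1/2::real)^(Suc k) \<le> (1/2)^(Suc N)" by (intro power_decreasing) (auto simp: k_def)
          ultimately have "d l y < e" using N by linarith
          then show "y \<in> B m" using e(2) yS by (auto simp: qball_def)
        qed
        then show "m \<in> A" using up nxA by blast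
      qed
    qed
    then show ?thesis using lS by blast
  qed
  have "PiChar X B F J"
    unfolding PiChar_def
  proof (intro conjI allI)
    fix i show "finite (F i)" by (rule finF)
  next
    fix A
    show "(\<exists>x\<in>topspace X. A = eX B x) \<longleftrightarrow> (\<forall>i. F i \<subseteq> A \<longrightarrow> (\<exists>j\<in>A. J i j))"
      using dir conv unfolding S_def by blast
  qed
  then show ?thesis using inj unfolding S_def by blast
qed

definition qseq :: "nat \<Rightarrow> nat \<Rightarrow> nat" where
  "qseq j = (\<lambda>i. if i < length (from_nat j :: nat list) then (from_nat j :: nat list) ! i else 0)"

lemma qseq_cyl: "qseq (to_nat (pre p K)) \<in> cyl (pre p K)"
  by (simp add: qseq_def cyl_def)

lemma dense_eq:
  assumes g1: "continuous_map (subtopology baire_space UNIV) baire_space g1"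
    and g2: "continuous_map (subtopology baire_space UNIV) baire_space g2"
    and eq: "\<And>j. g1 (qseq j) = g2 (qseq j)"
  shows "g1 = g2"
proof (intro ext)
  fix p i
  have e1: "\<exists>K. \<forall>q\<in>cyl (pre p K) \<inter> UNIV. g1 q i = g1 p i"
    using g1 unfolding cont_to_baire by (elim ballE allE) auto
  have e2: "\<exists>K. \<forall>q\<in>cyl (pre p K) \<inter> UNIV. g2 q i = g2 p i"
    using g2 unfolding cont_to_baire by (elim ballE allE) auto
  obtain K1 where K1: "\<forall>q\<in>cyl (pre p K1) \<inter> UNIV. g1 q i = g1 p i" using e1 by (elim exE)
  obtain K2 where K2: "\<forall>q\<in>cyl (pre p K2) \<inter> UNIV. g2 q i = g2 p i" using e2 by (elim exE)
  define K where "K = max K1 K2"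
  define q where "q = qseq (to_nat (pre p K))"
  have q: "q \<in> cyl (pre p K)" unfolding q_def by (rule qseq_cyl)
  have le: "K1 \<le> K" "K2 \<le> K" by (simp_all add: K_def)
  have qK1: "q \<in> cyl (pre p K1)" using subsetD[OF cyl_pre_mono[OF le(1), of p] q] .
  have qK2: "q \<in> cyl (pre p K2)" using subsetD[OF cyl_pre_mono[OF le(2), of p] q] .
  have h1: "g1 q i = g1 p i" using bspec[OF K1, of q] qK1 by blast
  have h2: "g2 q i = g2 p i" using bspec[OF K2, of q] qK2 by blast
  have h3: "g1 q = g2 q" unfolding q_def by (rule eq)
  show "g1 p i = g2 p i" using h1 h2 h3 by metis
qed

lemma no_inj_pow: "\<not> inj (\<Phi> :: (nat \<Rightarrow> nat) set \<Rightarrow> (nat \<Rightarrow> nat))"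
proof
  assume "inj \<Phi>"
  then have "surj (inv \<Phi>)" by (rule inj_imp_surj_inv)
  then have "inv \<Phi> ` UNIV = Pow UNIV" by simp
  then show False using Cantors_theorem by blast
qed

lemma adm_T0:
  assumes adm: "admissible_rep X D \<rho>" and b: "isbase X B"
  shows "inj_on (eX B) (topspace X)"
proof (rule inj_onI, rule ccontr)
  fix x y assume x: "x \<in> topspace X" and y: "y \<in> topspace X" and e: "eX B x = eX B y" and ne: "x \<noteq> y"
  have ind: "x \<in> U \<longleftrightarrow> y \<in> U" if U: "openin X U" for U
  proof
    assume "x \<in> U"
    then obtain n where "x \<in> B n" "B n \<subseteq> U" using isbaseD2[OF b U] by blast
    then show "y \<in> U" using e by (auto simp: eX_def)
  next
    assume "y \<in> U"
    then obtain n where "y \<in> B n" "B n \<subseteq> U" using isbaseD2[OF b U] by blast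
    then show "x \<in> U" using e by (auto simp: eX_def)
  qed
  define f where "f S p = (if p \<in> S then x else y)" for S :: "(nat \<Rightarrow> nat) set" and p
  have fc: "continuous_map (subtopology baire_space UNIV) X (f S)" for S
    unfolding cont_from_baire
  proof (intro conjI allI impI ballI)
    show "f S ` UNIV \<subseteq> topspace X" using x y by (auto simp: f_def)
  next
    fix U p assume U: "openin X U" and "f S p \<in> U"
    then have "x \<in> U \<and> y \<in> U" using ind[OF U] by (auto simp: f_def split: if_splits)
    then have "\<forall>q\<in>cyl (pre p 0) \<inter> UNIV. f S q \<in> U" by (auto simp: f_def)
    then show "\<exists>K. \<forall>q\<in>cyl (pre p K) \<inter> UNIV. f S q \<in> U" by blast
  qed
  have ex: "\<exists>g. continuous_map (subtopology baire_space UNIV) baire_space g \<and> (\<forall>p. f S p = \<rho> (g p))" for S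
  proof -
    obtain E g where g: "continuous_map (subtopology baire_space E) baire_space g"
      "UNIV = {p \<in> E. g p \<in> D}" "\<forall>p\<in>UNIV. f S p = \<rho> (g p)"
      using adm fc[of S] unfolding admissible_rep_def by blast
    have "E = UNIV" using g(2) by blast
    then show ?thesis using g by blast
  qed
  define G where "G S = (SOME g. continuous_map (subtopology baire_space UNIV) baire_space g \<and> (\<forall>p. f S p = \<rho> (g p)))" for S
  have G: "continuous_map (subtopology baire_space UNIV) baire_space (G S) \<and> (\<forall>p. f S p = \<rho> (G S p))" for S
    unfolding G_def by (rule someI_ex[OF ex])
  have SG: "S = {p. \<rho> (G S p) = x}" for S
  proof -
    have "p \<in> S \<longleftrightarrow> \<rho> (G S p) = x" for p
    proof -
      have fp: "f S p = \<rho> (G S p)" using G[of S] by blast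
      show ?thesis
      proof (cases "p \<in> S")
        case True then show ?thesis using fp by (simp add: f_def)
      next
        case False then show ?thesis using fp ne by (simp add: f_def)
      qed
    qed
    then show ?thesis by blast
  qed
  define \<Phi> where "\<Phi> S = (\<lambda>k. G S (qseq (fst (prod_decode k))) (snd (prod_decode k)))" for S
  have "inj \<Phi>"
  proof (rule injI)
    fix S1 S2 assume eq: "\<Phi> S1 = \<Phi> S2"
    have "G S1 (qseq j) i = G S2 (qseq j) i" for j i
      using fun_cong[OF eq, of "prod_encode (j, i)"] by (simp add: \<Phi>_def)
    then have "G S1 (qseq j) = G S2 (qseq j)" for j by blast
    then have "G S1 = G S2" using dense_eq[of "G S1" "G S2"] G[of S1] G[of S2] by blast
    then show "S1 = S2" using SG[of S1] SG[of S2] by simp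
  qed
  then show False using no_inj_pow by blast
qed

type_synonym idx6 = "(nat list \<times> nat \<times> nat \<times> nat) + (nat \<times> nat) + unit"

lemma En_splice: "En (\<lambda>k. if k < K then q k else r (k - K)) = EnK q K \<union> En r"
proof (intro set_eqI iffI)
  fix n assume "n \<in> En (\<lambda>k. if k < K then q k else r (k - K))"
  then obtain k where k: "(if k < K then q k else r (k - K)) = Suc n" by (auto simp: En_def)
  show "n \<in> EnK q K \<union> En r"
  proof (cases "k < K")
    case True then show ?thesis using k by (auto simp: EnK_def)
  next
    case False then show ?thesis using k by (auto simp: En_def)
  qed
next
  fix n assume "n \<in> EnK q K \<union> En r"
  then show "n \<in> En (\<lambda>k. if k < K then q k else r (k - K))"
  proof
    assume "n \<in> EnK q K"
    then obtain k where "k < K" "q k = Suc n" by (auto simp: EnK_def)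
    then show ?thesis unfolding En_def by (intro CollectI exI[of _ k]) simp
  next
    assume "n \<in> En r"
    then obtain k where "r k = Suc n" by (auto simp: En_def)
    then show ?thesis unfolding En_def by (intro CollectI exI[of _ "k + K"]) simp
  qed
qed

lemma finite_EnK_set: "finite (EnK q K)"
proof -
  have "EnK q K \<subseteq> (\<lambda>k. q k - 1) ` {..<K}" by (force simp: EnK_def)
  then show ?thesis by (rule finite_subset) simp
qed

lemma cyl_Nil[simp]: "cyl [] = UNIV" by (simp add: cyl_def)

lemma cyl_take: "take (length s) t = s \<Longrightarrow> cyl t \<subseteq> cyl s"
proof
  fix p assume tk: "take (length s) t = s" and p: "p \<in> cyl t"
  have "p k = s ! k" if "k < length s" for k
  proof -
    have ls: "length s \<le> length t" using tk by (metis length_take min.absorb_iff2 nat_le_linear take_all)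
    then have "k < length t" using that by simp
    then have "p k = t ! k" using p by (simp add: cyl_def)
    also have "\<dots> = take (length s) t ! k" using that by simp
    also have "\<dots> = s ! k" using tk by simp
    finally show ?thesis .
  qed
  then show "p \<in> cyl s" by (simp add: cyl_def)
qed

lemma take_pre:
  assumes "p \<in> cyl s" "length s \<le> K"
  shows "take (length s) (pre p K) = s"
proof (rule nth_equalityI)
  show "length (take (length s) (pre p K)) = length s" using assms(2) by simp
  fix k assume "k < length (take (length s) (pre p K))"
  then have k: "k < length s" "k < K" using assms(2) by auto
  then show "take (length s) (pre p K) ! k = s ! k"
    using assms(1) by (simp add: pre_def cyl_def)
qed

lemma L6:
  fixes X :: "'a topology"
  assumes adm: "admissible_rep X D \<rho>" and pol: "Polish_space (subtopology baire_space D)"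
    and b: "isbase X B" and inj: "inj_on (eX B) (topspace X)"
  shows "\<exists>(F :: idx6 \<Rightarrow> nat set) J. PiChar X B F J"
proof -
  define S where "S = topspace X"
  have \<rho>c: "continuous_map (subtopology baire_space D) X \<rho>" using adm by (simp add: admissible_rep_def)
  have \<rho>S: "\<rho> p \<in> S" if "p \<in> D" for p using \<rho>c that unfolding cont_from_baire S_def by blast
  have \<rho>o: "\<exists>K. \<forall>q\<in>cyl (pre p K) \<inter> D. \<rho> q \<in> U" if "openin X U" "p \<in> D" "\<rho> p \<in> U" for U p
    using \<rho>c that unfolding cont_from_baire by blast
  have gd: "gdelta_in baire_space D" by (rule Polish_gdelta[OF pol])
  then obtain \<U> where \<U>: "countable \<U>" "\<forall>U\<in>\<U>. openin baire_space U" "\<Inter>\<U> = D"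
    unfolding gdelta_in_alt intersection_of_def by blast
  define Ob where "Ob k = (if \<U> = {} then UNIV else from_nat_into \<U> k)" for k
  have Oo: "openin baire_space (Ob k)" for k
    using \<U>(2) from_nat_into[of \<U> k] openin_topspace[of baire_space] by (auto simp: Ob_def)
  have DO: "D = \<Inter> (range Ob)"
  proof (cases "\<U> = {}")
    case True then show ?thesis using \<U>(3) by (simp add: Ob_def)
  next
    case False
    then have "range Ob = \<U>" using range_from_nat_into[OF False \<U>(1)] by (simp add: Ob_def)
    then show ?thesis using \<U>(3) by simp
  qed
  obtain E g where g: "continuous_map (subtopology baire_space E) baire_space g"
    and DE: "Dstd X B = {p \<in> E. g p \<in> D}" and gr: "\<forall>p\<in>Dstd X B. rstd X B p = \<rho> (g p)"
    using adm cont_rstd[OF b inj] unfolding admissible_rep_def by blast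
  define P where "P t = rstd X B ` {q \<in> Dstd X B. g q \<in> cyl t}" for t
  have Psub: "P t \<subseteq> \<rho> ` (cyl t \<inter> D)" for t
  proof
    fix y assume "y \<in> P t"
    then obtain q where q: "q \<in> Dstd X B" "g q \<in> cyl t" "y = rstd X B q" by (auto simp: P_def)
    then have "g q \<in> D" "y = \<rho> (g q)" using DE gr by auto
    then show "y \<in> \<rho> ` (cyl t \<inter> D)" using q(2) by blast
  qed
  have Pnil: "S \<subseteq> P []"
  proof
    fix x assume x: "x \<in> S"
    have "name B x \<in> Dstd X B" using x unfolding S_def by (rule name_Dstd)
    moreover have "rstd X B (name B x) = x" using rstd_eq[OF inj] x unfolding S_def by simp
    ultimately show "x \<in> P []" unfolding P_def by force
  qed
  have Popen: "openin X (P t)" for t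
    unfolding openin_subopen[of X "P t"]
  proof
    fix y assume "y \<in> P t"
    then obtain q where q: "q \<in> Dstd X B" "g q \<in> cyl t" "y = rstd X B q" by (auto simp: P_def)
    have qE: "q \<in> E" using q(1) DE by blast
    obtain K where K: "\<forall>q'\<in>cyl (pre q K) \<inter> E. g q' \<in> cyl t"
      using g openin_cyl[of t] qE q(2) unfolding cont_from_baire by blast
    have ry: "y \<in> topspace X \<and> eX B y = En q" using rstd[OF inj q(1)] q(3) by simp
    define V where "V = topspace X \<inter> \<Inter> (B ` EnK q K)"
    have Vo: "openin X V" unfolding V_def
      by (rule openin_Int_Inter) (use finite_EnK_set isbaseD1[OF b] in auto)
    have yV: "y \<in> V" using ry EnK_sub[of q K] unfolding V_def by (auto simp: eX_def)
    have "V \<subseteq> P t"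
    proof
      fix z assume z: "z \<in> V"
      then have zX: "z \<in> topspace X" by (simp add: V_def)
      have EKz: "EnK q K \<subseteq> eX B z" using z by (auto simp: V_def eX_def)
      define q' where "q' = (\<lambda>k. if k < K then q k else name B z (k - K))"
      have Eq': "En q' = eX B z" using En_splice[of K q "name B z"] EKz unfolding q'_def by auto
      have q'D: "q' \<in> Dstd X B" using Eq' zX by (auto simp: Dstd_def)
      have q'c: "q' \<in> cyl (pre q K)" by (simp add: in_cyl_pre q'_def)
      have "g q' \<in> cyl t" using K q'c q'D DE by blast
      moreover have "rstd X B q' = z" using rstd_eq[OF inj zX Eq'] .
      ultimately show "z \<in> P t" using q'D unfolding P_def by blast
    qed
    then show "\<exists>T. openin X T \<and> y \<in> T \<and> T \<subseteq> P t" using Vo yV by blast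
  qed
  define Ext where "Ext s m i j \<longleftrightarrow> (\<exists>t. take (length s) t = s \<and> length s < length t \<and> cyl t \<subseteq> Ob i \<and>
      \<rho> ` (cyl t \<inter> D) \<subseteq> B m \<and> B j \<subseteq> P t)" for s m i j
  define F :: "idx6 \<Rightarrow> nat set" where "F i = (case i of Inl (s, n, m, k) \<Rightarrow> (if B n \<subseteq> P s then {n, m} else {})
      | Inr (Inl (n, m)) \<Rightarrow> (if B n \<subseteq> B m then {n} else {}) | Inr (Inr u) \<Rightarrow> {})" for i
  define J :: "idx6 \<Rightarrow> nat \<Rightarrow> bool" where "J i j = (case i of Inl (s, n, m, k) \<Rightarrow> (if B n \<subseteq> P s then Ext s m k j else True)
      | Inr (Inl (n, m)) \<Rightarrow> (if B n \<subseteq> B m then j = m else True) | Inr (Inr u) \<Rightarrow> True)" for i j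
  have finF: "finite (F i)" for i
    unfolding F_def by (auto split: sum.splits prod.splits)
  have nonemp: "eX B x \<noteq> {}" if "x \<in> S" for x
    using isbase_cover[OF b] that unfolding S_def eX_def by blast
  have dir: "\<forall>i. F i \<subseteq> eX B x \<longrightarrow> (\<exists>j\<in>eX B x. J i j)" if x: "x \<in> S" for x
  proof
    fix i :: idx6
    show "F i \<subseteq> eX B x \<longrightarrow> (\<exists>j\<in>eX B x. J i j)"
    proof (cases i)
      case (Inl snmk)
      obtain s n m k where snmk: "snmk = (s, n, m, k)" by (metis prod_cases4)
      show ?thesis
      proof (cases "B n \<subseteq> P s")
        case False
        then show ?thesis using nonemp[OF x] by (auto simp: F_def J_def Inl snmk)
      next
        case True
        show ?thesis
        proof
          assume "F i \<subseteq> eX B x"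
          then have xnm: "x \<in> B n" "x \<in> B m" using True by (auto simp: F_def Inl snmk eX_def)
          then have "x \<in> P s" using True by blast
          then obtain q where q: "q \<in> Dstd X B" "g q \<in> cyl s" "x = rstd X B q" by (auto simp: P_def)
          define p' where "p' = g q"
          have p'D: "p' \<in> D" using q(1) DE by (auto simp: p'_def)
          have p'x: "\<rho> p' = x" using gr q by (simp add: p'_def)
          have "p' \<in> Ob k" using p'D DO by blast
          then obtain K2 where K2: "cyl (pre p' K2) \<subseteq> Ob k" using Oo[of k] unfolding openin_baire by blast
          obtain K1 where K1: "\<forall>q\<in>cyl (pre p' K1) \<inter> D. \<rho> q \<in> B m"
            using \<rho>o[OF isbaseD1[OF b] p'D] p'x xnm(2) by blast
          define K where "K = max (max K1 K2) (Suc (length s))"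
          define t where "t = pre p' K"
          have le: "K1 \<le> K" "K2 \<le> K" "Suc (length s) \<le> K" by (auto simp: K_def)
          have t1: "take (length s) t = s" unfolding t_def
            by (rule take_pre) (use q(2) le(3) in \<open>auto simp: p'_def\<close>)
          have t2: "length s < length t" using le(3) by (simp add: t_def)
          have t3: "cyl t \<subseteq> Ob k" using cyl_pre_mono[OF le(2), of p'] K2 by (auto simp: t_def)
          have t4: "\<rho> ` (cyl t \<inter> D) \<subseteq> B m" using cyl_pre_mono[OF le(1), of p'] K1 by (auto simp: t_def)
          have "x \<in> P t" unfolding P_def t_def using q by (auto simp: p'_def[symmetric])
          then obtain j where j: "x \<in> B j" "B j \<subseteq> P t" using isbaseD2[OF b Popen] by blast
          then have "Ext s m k j" unfolding Ext_def using t1 t2 t3 t4 by blast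
          moreover have "j \<in> eX B x" using j by (simp add: eX_def)
          ultimately show "\<exists>j\<in>eX B x. J i j" using True by (auto simp: J_def Inl snmk)
        qed
      qed
    next
      case (Inr i')
      show ?thesis
      proof (cases i')
        case (Inl nm)
        obtain n m where nm: "nm = (n, m)" by (metis surj_pair)
        show ?thesis
        proof (cases "B n \<subseteq> B m")
          case True
          then show ?thesis by (auto simp: F_def J_def Inr Inl nm eX_def)
        next
          case False
          then show ?thesis using nonemp[OF x] by (auto simp: F_def J_def Inr Inl nm)
        qed
      next
        case (Inr u)
        then show ?thesis using nonemp[OF x] \<open>i = Inr i'\<close> by (auto simp: F_def J_def)
      qed
    qed
  qed
  have conv: "\<exists>x\<in>S. A = eX B x" if H: "\<forall>i. F i \<subseteq> A \<longrightarrow> (\<exists>j\<in>A. J i j)" for A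
  proof -
    have up: "m \<in> A" if "n \<in> A" "B n \<subseteq> B m" for n m
      using H[rule_format, of "Inr (Inl (n, m))"] that by (auto simp: F_def J_def)
    obtain n0 where n0: "n0 \<in> A" using H[rule_format, of "Inr (Inr ())"] by (auto simp: F_def J_def)
    define a where "a k = (if k \<in> A then k else n0)" for k
    have aA: "a k \<in> A" for k using n0 by (simp add: a_def)
    have step: "\<exists>j\<in>A. Ext s m k j" if "n \<in> A" "m \<in> A" "B n \<subseteq> P s" for s n m k
      using H[rule_format, of "Inl (s, n, m, k)"] that by (auto simp: F_def J_def)
    define Q :: "nat \<Rightarrow> nat list \<times> nat \<Rightarrow> nat list \<times> nat \<Rightarrow> bool" where "Q k tn tn' \<longleftrightarrow> snd tn' \<in> A \<and> take (length (fst tn)) (fst tn') = fst tn \<and>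
        length (fst tn) < length (fst tn') \<and> cyl (fst tn') \<subseteq> Ob k \<and>
        \<rho> ` (cyl (fst tn') \<inter> D) \<subseteq> B (a k) \<and> B (snd tn') \<subseteq> P (fst tn')" for k tn tn'
    define st where "st = rec_nat ([], n0) (\<lambda>k tn. SOME tn'. Q k tn tn')"
    have st0: "st 0 = ([], n0)" by (simp add: st_def)
    have stS: "st (Suc k) = (SOME tn'. Q k (st k) tn')" for k by (simp add: st_def)
    have inv: "snd (st k) \<in> A \<and> B (snd (st k)) \<subseteq> P (fst (st k))" for k
    proof (induction k)
      case 0
      have "B n0 \<subseteq> S" using isbase_sub[OF b] unfolding S_def .
      then show ?case using st0 n0 Pnil by auto
    next
      case (Suc k)
      obtain j where j: "j \<in> A" "Ext (fst (st k)) (a k) k j" using step[OF _ aA] Suc by blast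
      then obtain t where "take (length (fst (st k))) t = fst (st k)" "length (fst (st k)) < length t"
        "cyl t \<subseteq> Ob k" "\<rho> ` (cyl t \<inter> D) \<subseteq> B (a k)" "B j \<subseteq> P t" unfolding Ext_def by blast
      then have "Q k (st k) (t, j)" using j(1) by (simp add: Q_def)
      then have "Q k (st k) (st (Suc k))" unfolding stS by (rule someI)
      then show ?case by (simp add: Q_def)
    qed
    have Qk: "Q k (st k) (st (Suc k))" for k
    proof -
      obtain j where j: "j \<in> A" "Ext (fst (st k)) (a k) k j" using step[OF _ aA] inv by blast
      then obtain t where "take (length (fst (st k))) t = fst (st k)" "length (fst (st k)) < length t"
        "cyl t \<subseteq> Ob k" "\<rho> ` (cyl t \<inter> D) \<subseteq> B (a k)" "B j \<subseteq> P t" unfolding Ext_def by blast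
      then have "Q k (st k) (t, j)" using j(1) by (simp add: Q_def)
      then show "Q k (st k) (st (Suc k))" unfolding stS by (rule someI)
    qed
    define tt where "tt k = fst (st k)" for k
    have tt_take: "take (length (tt k)) (tt (Suc k)) = tt k" for k using Qk[of k] by (simp add: Q_def tt_def)
    have tt_len: "length (tt k) < length (tt (Suc k))" for k using Qk[of k] by (simp add: Q_def tt_def)
    have tt_O: "cyl (tt (Suc k)) \<subseteq> Ob k" for k using Qk[of k] by (simp add: Q_def tt_def)
    have tt_B: "\<rho> ` (cyl (tt (Suc k)) \<inter> D) \<subseteq> B (a k)" for k using Qk[of k] by (simp add: Q_def tt_def)
    have lenk: "k \<le> length (tt k)" for k
    proof (induction k)
      case 0 then show ?case by simp
    next
      case (Suc k) then show ?case using tt_len[of k] by simp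
    qed
    have chain: "take (length (tt k)) (tt k') = tt k" if "k \<le> k'" for k k'
      using that
    proof (induction k' rule: dec_induct)
      case base then show ?case by simp
    next
      case (step k')
      have "length (tt k) \<le> length (tt k')"
        using step.IH by (metis length_take min.absorb_iff2 nat_le_linear take_all)
      then have "take (length (tt k)) (tt (Suc k')) = take (length (tt k)) (take (length (tt k')) (tt (Suc k')))"
        by (simp add: min.absorb1)
      also have "\<dots> = take (length (tt k)) (tt k')" using tt_take[of k'] by simp
      finally show ?case using step.IH by simp
    qed
    define p where "p i = tt (Suc i) ! i" for i
    have pc: "p \<in> cyl (tt k)" for k
    proof -
      have "p i = tt k ! i" if i: "i < length (tt k)" for i
      proof -
        define M where "M = max k (Suc i)"
        have "tt k ! i = take (length (tt k)) (tt M) ! i" using chain[of k M] by (simp add: M_def)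
        also have "\<dots> = tt M ! i" using i by simp
        finally have 1: "tt k ! i = tt M ! i" .
        have i2: "i < length (tt (Suc i))" using lenk[of "Suc i"] by simp
        have "tt (Suc i) ! i = take (length (tt (Suc i))) (tt M) ! i" using chain[of "Suc i" M] by (simp add: M_def)
        also have "\<dots> = tt M ! i" using i2 by simp
        finally have 2: "tt (Suc i) ! i = tt M ! i" .
        show ?thesis using 1 2 by (simp add: p_def)
      qed
      then show ?thesis by (simp add: cyl_def)
    qed
    have pD: "p \<in> D" using pc tt_O DO by blast
    define x where "x = \<rho> p"
    have xS: "x \<in> S" using \<rho>S[OF pD] by (simp add: x_def)
    have "A = eX B x"
    proof
      show "A \<subseteq> eX B x"
      proof
        fix n assume "n \<in> A"
        then have "a n = n" by (simp add: a_def)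
        have "p \<in> cyl (tt (Suc n)) \<inter> D" using pc[of "Suc n"] pD by blast
        then have "\<rho> p \<in> B (a n)" using tt_B[of n] unfolding image_subset_iff by blast
        then show "n \<in> eX B x" using \<open>a n = n\<close> unfolding x_def eX_def by simp
      qed
    next
      show "eX B x \<subseteq> A"
      proof
        fix m assume "m \<in> eX B x"
        then have xm: "\<rho> p \<in> B m" by (simp add: eX_def x_def)
        obtain K where K: "\<forall>q\<in>cyl (pre p K) \<inter> D. \<rho> q \<in> B m" using \<rho>o[OF isbaseD1[OF b] pD xm] by blast
        have "cyl (tt K) \<subseteq> cyl (pre p K)"
        proof
          fix q assume q: "q \<in> cyl (tt K)"
          have "q k = p k" if "k < K" for k
          proof -
            have "k < length (tt K)" using lenk[of K] that by simp
            then show ?thesis using q pc[of K] by (simp add: cyl_def)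
          qed
          then show "q \<in> cyl (pre p K)" by (simp add: in_cyl_pre)
        qed
        then have "\<rho> ` (cyl (tt K) \<inter> D) \<subseteq> B m" using K by blast
        moreover have "B (snd (st K)) \<subseteq> P (tt K)" using inv by (simp add: tt_def)
        ultimately have "B (snd (st K)) \<subseteq> B m" using Psub[of "tt K"] by blast
        then show "m \<in> A" using up inv by blast
      qed
    qed
    then show ?thesis using xS by blast
  qed
  have "PiChar X B F J"
    unfolding PiChar_def
  proof (intro conjI allI)
    fix i show "finite (F i)" by (rule finF)
  next
    fix A
    show "(\<exists>x\<in>topspace X. A = eX B x) \<longleftrightarrow> (\<forall>i. F i \<subseteq> A \<longrightarrow> (\<exists>j\<in>A. J i j))"
      using dir conv unfolding S_def by blast
  qed
  then show ?thesis by blast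
qed

theorem theorem48:
  fixes X :: "'a topology"
  assumes "second_countable X"
  shows "quasi_Polish X \<longleftrightarrow>
    (\<exists>D \<rho>. admissible_rep X D \<rho> \<and> Polish_space (subtopology baire_space D))"
proof -
  obtain B where b: "isbase X B" using second_countable_base[OF assms] by blast
  show ?thesis
  proof
    assume qp: "quasi_Polish X"
    obtain F :: "idx5 \<Rightarrow> nat set" and J where inj: "inj_on (eX B) (topspace X)" and pc: "PiChar X B F J"
      using L5[OF qp b] by blast
    have "admissible_rep X (Dstd X B) (rstd X B)" by (rule adm_std[OF b inj])
    moreover have "Polish_space (subtopology baire_space (Dstd X B))" by (rule Polish_sub[OF Dstd_gdelta[OF pc]])
    ultimately show "\<exists>D \<rho>. admissible_rep X D \<rho> \<and> Polish_space (subtopology baire_space D)" by blast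
  next
    assume "\<exists>D \<rho>. admissible_rep X D \<rho> \<and> Polish_space (subtopology baire_space D)"
    then obtain D \<rho> where adm: "admissible_rep X D \<rho>" and pol: "Polish_space (subtopology baire_space D)" by blast
    have inj: "inj_on (eX B) (topspace X)" by (rule adm_T0[OF adm b])
    obtain F :: "idx6 \<Rightarrow> nat set" and J where pc: "PiChar X B F J" using L6[OF adm pol b inj] by blast
    show "quasi_Polish X" by (rule L7[OF assms b inj pc])
  qed
qed

end
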